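(* Consider the $K$-class system with class-wise distributions described in the context, with constants $\bar M_R,\bar L_R,\bar L_P,\bar L_Q>0$ and $\gamma\in[0,1)$. Let $\mathbf{x}_0^{\mathbf{N}}$ be given initial states and $\bar{\boldsymbol\mu}_0\in\mathcal P^K(\mathcal X)$ the resulting collection of class-wise empirical state distributions. Define $\bar C_R=\bar M_R+\bar L_R$, $\bar C_P=2+K\bar L_P$, $\bar S_R=\bar M_R(1+\bar L_Q)+\bar L_R(2+K\bar L_Q)$, $\bar S_P=(1+K\bar L_Q)+K\bar L_P(2+K\bar L_Q)$. If $\gamma\bar S_P<1$, then for every $\bar{\boldsymbol\pi}\in\bar\Pi$, $$\Big|\bar v^{\mathbf N}(\mathbf x_0^{\mathbf N},\bar{\boldsymbol\pi})-\bar v^{\mathrm{MF}}(\bar{\boldsymbol\mu}_0,\bar{\boldsymbol\pi})\Big|\le\frac{\bar C_R}{1-\gamma}\sqrt{|\mathcal X||\mathcal U|}\Big(\sum_{k\in[K]}\frac{1}{\sqrt{N_k}}\Big)+\bar C_P\Big(\frac{\bar S_R}{\bar S_P-1}\Big)\sqrt{|\mathcal X||\mathcal U|}\Big(\sum_{k\in[K]}\frac1{\sqrt{N_k}}\Big)\Big[\frac{1}{1-\gamma\bar S_P}-\frac{1}{1-\gamma}\Big].$$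
   Context: Fix integers $K\ge1$, $N_1,\dots,N_K\ge1$, $[K]=\{1,\dots,K\}$, $N_{\mathrm{pop}}=\sum_kN_k$, $\theta_k=N_k/N_{\mathrm{pop}}$, finite sets $\mathcal X,\mathcal U$. $\mathcal P(A)$ denotes probability distributions on $A$; $\mathcal P^K(A)=\mathcal P(A)\times\cdots\times\mathcal P(A)$ ($K$ factors), whose elements $\bar{\boldsymbol\mu}$ are written $\bar{\boldsymbol\mu}(\cdot,k)\in\mathcal P(A)$, with $|\bar{\boldsymbol\mu}|_1=\sum_k\sum_a|\bar{\boldsymbol\mu}(a,k)|$. Agent $j\in[N_k]$ of class $k$ has state $x_{j,k}^t\in\mathcal X$, action $u_{j,k}^t\in\mathcal U$. Class-wise empirical distributions: $\bar{\boldsymbol\mu}_t^{\mathbf N}(x,k)=\frac1{N_k}\sum_{j=1}^{N_k}\mathbf 1(x_{j,k}^t=x)$, $\bar{\boldsymbol\nu}_t^{\mathbf N}(u,k)=\frac1{N_k}\sum_{j=1}^{N_k}\mathbf 1(u_{j,k}^t=u)$. For each $k$: $\bar r_k:\mathcal X\times\mathcal U\times\mathcal P^K(\mathcal X)\times\mathcal P^K(\mathcal U)\to\mathbb R$ and $\bar P_k:\mathcal X\times\mathcal U\times\mathcal P^K(\mathcal X)\times\mathcal P^K(\mathcal U)\to\mathcal P(\mathcal X)$ with, for all arguments, $|\bar r_k(x,u,\bar{\boldsymbol\mu}_1,\bar{\boldsymbol\nu}_1)|\le\bar M_R$, $|\bar r_k(x,u,\bar{\boldsymbol\mu}_1,\bar{\boldsymbol\nu}_1)-\bar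 r_k(x,u,\bar{\boldsymbol\mu}_2,\bar{\boldsymbol\nu}_2)|\le\bar L_R(|\bar{\boldsymbol\mu}_1-\bar{\boldsymbol\mu}_2|_1+|\bar{\boldsymbol\nu}_1-\bar{\boldsymbol\nu}_2|_1)$, $|\bar P_k(x,u,\bar{\boldsymbol\mu}_1,\bar{\boldsymbol\nu}_1)-\bar P_k(x,u,\bar{\boldsymbol\mu}_2,\bar{\boldsymbol\nu}_2)|_1\le\bar L_P(|\bar{\boldsymbol\mu}_1-\bar{\boldsymbol\mu}_2|_1+|\bar{\boldsymbol\nu}_1-\bar{\boldsymbol\nu}_2|_1)$. A policy is $\bar{\boldsymbol\pi}=\{\bar{\boldsymbol\pi}_t\}_{t\ge0}$, $\bar{\boldsymbol\pi}_t=(\bar\pi_k^t)_k$, $\bar\pi_k^t:\mathcal X\times\mathcal P^K(\mathcal X)\to\mathcal P(\mathcal U)$; $\bar\Pi$ is the set of policies with $|\bar\pi_k^t(x,\bar{\boldsymbol\mu}_1)-\bar\pi_k^t(x,\bar{\boldsymbol\mu}_2)|_1\le\bar L_Q|\bar{\boldsymbol\mu}_1-\bar{\boldsymbol\mu}_2|_1$ for all $t,k,x$. Dynamics: conditioned on all states at time $t$, actions are independent across agents with $u_{j,k}^t\sim\bar\pi_k^t(x_{j,k}^t,\bar{\boldsymbol\mu}_t^{\mathbf N})$; conditioned on all states and actions at time $t$, next states are independent with $x_{j,k}^{t+1}\sim\bar P_k(x_{j,k}^t,u_{j,k}^t,\bar{\boldsymbol\mu}_t^{\mathbf N},\bar{\boldsymbol\nu}_t^{\mathbf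 N})$. Empirical value $\bar v^{\mathbf N}(\mathbf x_0^{\mathbf N},\bar{\boldsymbol\pi})=\frac1{N_{\mathrm{pop}}}\sum_k\sum_{j=1}^{N_k}\mathbb E[\sum_{t\ge0}\gamma^t\bar r_k(x_{j,k}^t,u_{j,k}^t,\bar{\boldsymbol\mu}_t^{\mathbf N},\bar{\boldsymbol\nu}_t^{\mathbf N})]$. Mean-field operators for $\bar{\boldsymbol\mu}\in\mathcal P^K(\mathcal X)$ and decision rules $\bar{\boldsymbol\pi}=(\bar\pi_k)_k$: $\bar\nu^{\mathrm{MF}}(\bar{\boldsymbol\mu},\bar{\boldsymbol\pi})(u,k)=\sum_x\bar\pi_k(x,\bar{\boldsymbol\mu})(u)\bar{\boldsymbol\mu}(x,k)$; $\bar P^{\mathrm{MF}}(\bar{\boldsymbol\mu},\bar{\boldsymbol\pi})(x',k)=\sum_{x,u}\bar{\boldsymbol\mu}(x,k)\bar\pi_k(x,\bar{\boldsymbol\mu})(u)\bar P_k(x,u,\bar{\boldsymbol\mu},\bar\nu^{\mathrm{MF}}(\bar{\boldsymbol\mu},\bar{\boldsymbol\pi}))(x')$; $\bar r_k^{\mathrm{MF}}(\bar{\boldsymbol\mu},\bar{\boldsymbol\pi})=\sum_{x,u}\bar{\boldsymbol\mu}(x,k)\bar\pi_k(x,\bar{\boldsymbol\mu})(u)\bar r_k(x,u,\bar{\boldsymbol\mu},\bar\nu^{\mathrm{MF}}(\bar{\boldsymbol\mu},\bar{\boldsymbol\pi}))$. Mean-field value: with $\bar{\boldsymbol\mu}_{t+1}=\bar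 P^{\mathrm{MF}}(\bar{\boldsymbol\mu}_t,\bar{\boldsymbol\pi}_t)$, $\bar v^{\mathrm{MF}}(\bar{\boldsymbol\mu}_0,\bar{\boldsymbol\pi})=\sum_k\theta_k\sum_{t\ge0}\gamma^t\bar r_k^{\mathrm{MF}}(\bar{\boldsymbol\mu}_t,\bar{\boldsymbol\pi}_t)$. *)

theory Defs
  imports "HOL-Probability.Probability"
begin

text \<open>Conventions: classes are indexed by k < K (i.e. [K] = {0..<K}); agent j of class k
  by j < N k.  An element of P^K(A) is a function nat => A pmf whose components k < K matter.
  A joint configuration of the N-agent system is a function (k,j) => state.\<close>

definition l1_pmf :: "'a::finite pmf \<Rightarrow> 'a pmf \<Rightarrow> real" where
  "l1_pmf p q = (\<Sum>a\<in>UNIV. \<bar>pmf p a - pmf q a\<bar>)"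

definition distK :: "nat \<Rightarrow> (nat \<Rightarrow> 'a::finite pmf) \<Rightarrow> (nat \<Rightarrow> 'a pmf) \<Rightarrow> real" where
  "distK K m1 m2 = (\<Sum>k<K. l1_pmf (m1 k) (m2 k))"

definition agents :: "nat \<Rightarrow> (nat \<Rightarrow> nat) \<Rightarrow> (nat \<times> nat) set" where
  "agents K N = (SIGMA k:{..<K}. {..<N k})"

definition Npop :: "nat \<Rightarrow> (nat \<Rightarrow> nat) \<Rightarrow> nat" where
  "Npop K N = (\<Sum>k<K. N k)"

definition theta :: "nat \<Rightarrow> (nat \<Rightarrow> nat) \<Rightarrow> nat \<Rightarrow> real" where
  "theta K N k = real (N k) / real (Npop K N)"

definition emp :: "(nat \<Rightarrow> nat) \<Rightarrow> (nat \<times> nat \<Rightarrow> 'a) \<Rightarrow> nat \<Rightarrow> 'a pmf" where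
  "emp N c k = map_pmf (\<lambda>j. c (k, j)) (pmf_of_set {..<N k})"

definition act_pmf ::
  "nat \<Rightarrow> (nat \<Rightarrow> nat) \<Rightarrow> (nat \<Rightarrow> nat \<Rightarrow> 'x \<Rightarrow> (nat \<Rightarrow> 'x pmf) \<Rightarrow> 'u pmf)
     \<Rightarrow> nat \<Rightarrow> (nat \<times> nat \<Rightarrow> 'x) \<Rightarrow> (nat \<times> nat \<Rightarrow> 'u) pmf" where
  "act_pmf K N pol t s =
     Pi_pmf (agents K N) undefined (\<lambda>(k, j). pol t k (s (k, j)) (emp N s))"

definition next_pmf ::
  "nat \<Rightarrow> (nat \<Rightarrow> nat) \<Rightarrow> (nat \<Rightarrow> 'x \<Rightarrow> 'u \<Rightarrow> (nat \<Rightarrow> 'x pmf) \<Rightarrow> (nat \<Rightarrow> 'u pmf) \<Rightarrow> 'x pmf)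
     \<Rightarrow> (nat \<times> nat \<Rightarrow> 'x) \<Rightarrow> (nat \<times> nat \<Rightarrow> 'u) \<Rightarrow> (nat \<times> nat \<Rightarrow> 'x) pmf" where
  "next_pmf K N P s a =
     Pi_pmf (agents K N) undefined (\<lambda>(k, j). P k (s (k, j)) (a (k, j)) (emp N s) (emp N a))"

primrec state_dist ::
  "nat \<Rightarrow> (nat \<Rightarrow> nat) \<Rightarrow> (nat \<Rightarrow> 'x \<Rightarrow> 'u \<Rightarrow> (nat \<Rightarrow> 'x pmf) \<Rightarrow> (nat \<Rightarrow> 'u pmf) \<Rightarrow> 'x pmf)
     \<Rightarrow> (nat \<Rightarrow> nat \<Rightarrow> 'x \<Rightarrow> (nat \<Rightarrow> 'x pmf) \<Rightarrow> 'u pmf) \<Rightarrow> (nat \<times> nat \<Rightarrow> 'x)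
     \<Rightarrow> nat \<Rightarrow> (nat \<times> nat \<Rightarrow> 'x) pmf" where
  "state_dist K N P pol x0 0 = return_pmf x0"
| "state_dist K N P pol x0 (Suc t) =
     bind_pmf (state_dist K N P pol x0 t)
       (\<lambda>s. bind_pmf (act_pmf K N pol t s) (\<lambda>a. next_pmf K N P s a))"

definition joint_dist ::
  "nat \<Rightarrow> (nat \<Rightarrow> nat) \<Rightarrow> (nat \<Rightarrow> 'x \<Rightarrow> 'u \<Rightarrow> (nat \<Rightarrow> 'x pmf) \<Rightarrow> (nat \<Rightarrow> 'u pmf) \<Rightarrow> 'x pmf)
     \<Rightarrow> (nat \<Rightarrow> nat \<Rightarrow> 'x \<Rightarrow> (nat \<Rightarrow> 'x pmf) \<Rightarrow> 'u pmf) \<Rightarrow> (nat \<times> nat \<Rightarrow> 'x)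
     \<Rightarrow> nat \<Rightarrow> ((nat \<times> nat \<Rightarrow> 'x) \<times> (nat \<times> nat \<Rightarrow> 'u)) pmf" where
  "joint_dist K N P pol x0 t =
     bind_pmf (state_dist K N P pol x0 t) (\<lambda>s. map_pmf (\<lambda>a. (s, a)) (act_pmf K N pol t s))"

definition v_N ::
  "nat \<Rightarrow> (nat \<Rightarrow> nat) \<Rightarrow> real
     \<Rightarrow> (nat \<Rightarrow> 'x \<Rightarrow> 'u \<Rightarrow> (nat \<Rightarrow> 'x pmf) \<Rightarrow> (nat \<Rightarrow> 'u pmf) \<Rightarrow> real)
     \<Rightarrow> (nat \<Rightarrow> 'x \<Rightarrow> 'u \<Rightarrow> (nat \<Rightarrow> 'x pmf) \<Rightarrow> (nat \<Rightarrow> 'u pmf) \<Rightarrow> 'x pmf)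
     \<Rightarrow> (nat \<times> nat \<Rightarrow> 'x) \<Rightarrow> (nat \<Rightarrow> nat \<Rightarrow> 'x \<Rightarrow> (nat \<Rightarrow> 'x pmf) \<Rightarrow> 'u pmf) \<Rightarrow> real" where
  "v_N K N \<gamma> r P x0 pol =
     (1 / real (Npop K N)) *
     (\<Sum>(k, j)\<in>agents K N. \<Sum>t. \<gamma> ^ t *
        measure_pmf.expectation (joint_dist K N P pol x0 t)
          (\<lambda>(s, a). r k (s (k, j)) (a (k, j)) (emp N s) (emp N a)))"

definition nu_MF :: "(nat \<Rightarrow> 'x pmf) \<Rightarrow> (nat \<Rightarrow> 'x \<Rightarrow> (nat \<Rightarrow> 'x pmf) \<Rightarrow> 'u pmf) \<Rightarrow> nat \<Rightarrow> 'u pmf" where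
  "nu_MF mu dr k = bind_pmf (mu k) (\<lambda>x. dr k x mu)"

definition P_MF ::
  "(nat \<Rightarrow> 'x \<Rightarrow> 'u \<Rightarrow> (nat \<Rightarrow> 'x pmf) \<Rightarrow> (nat \<Rightarrow> 'u pmf) \<Rightarrow> 'x pmf)
     \<Rightarrow> (nat \<Rightarrow> 'x pmf) \<Rightarrow> (nat \<Rightarrow> 'x \<Rightarrow> (nat \<Rightarrow> 'x pmf) \<Rightarrow> 'u pmf) \<Rightarrow> nat \<Rightarrow> 'x pmf" where
  "P_MF P mu dr k =
     bind_pmf (mu k) (\<lambda>x. bind_pmf (dr k x mu) (\<lambda>u. P k x u mu (nu_MF mu dr)))"

definition r_MF ::
  "(nat \<Rightarrow> 'x::finite \<Rightarrow> 'u::finite \<Rightarrow> (nat \<Rightarrow> 'x pmf) \<Rightarrow> (nat \<Rightarrow> 'u pmf) \<Rightarrow> real)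
     \<Rightarrow> (nat \<Rightarrow> 'x pmf) \<Rightarrow> (nat \<Rightarrow> 'x \<Rightarrow> (nat \<Rightarrow> 'x pmf) \<Rightarrow> 'u pmf) \<Rightarrow> nat \<Rightarrow> real" where
  "r_MF r mu dr k =
     (\<Sum>x\<in>UNIV. \<Sum>u\<in>UNIV. pmf (mu k) x * pmf (dr k x mu) u * r k x u mu (nu_MF mu dr))"

primrec mf_traj ::
  "(nat \<Rightarrow> 'x \<Rightarrow> 'u \<Rightarrow> (nat \<Rightarrow> 'x pmf) \<Rightarrow> (nat \<Rightarrow> 'u pmf) \<Rightarrow> 'x pmf)
     \<Rightarrow> (nat \<Rightarrow> nat \<Rightarrow> 'x \<Rightarrow> (nat \<Rightarrow> 'x pmf) \<Rightarrow> 'u pmf) \<Rightarrow> (nat \<Rightarrow> 'x pmf)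
     \<Rightarrow> nat \<Rightarrow> nat \<Rightarrow> 'x pmf" where
  "mf_traj P pol mu0 0 = mu0"
| "mf_traj P pol mu0 (Suc t) = P_MF P (mf_traj P pol mu0 t) (pol t)"

definition v_MF ::
  "nat \<Rightarrow> (nat \<Rightarrow> nat) \<Rightarrow> real
     \<Rightarrow> (nat \<Rightarrow> 'x::finite \<Rightarrow> 'u::finite \<Rightarrow> (nat \<Rightarrow> 'x pmf) \<Rightarrow> (nat \<Rightarrow> 'u pmf) \<Rightarrow> real)
     \<Rightarrow> (nat \<Rightarrow> 'x \<Rightarrow> 'u \<Rightarrow> (nat \<Rightarrow> 'x pmf) \<Rightarrow> (nat \<Rightarrow> 'u pmf) \<Rightarrow> 'x pmf)
     \<Rightarrow> (nat \<Rightarrow> 'x pmf) \<Rightarrow> (nat \<Rightarrow> nat \<Rightarrow> 'x \<Rightarrow> (nat \<Rightarrow> 'x pmf) \<Rightarrow> 'u pmf) \<Rightarrow> real" where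
  "v_MF K N \<gamma> r P mu0 pol =
     (\<Sum>k<K. theta K N k * (\<Sum>t. \<gamma> ^ t * r_MF r (mf_traj P pol mu0 t) (pol t) k))"

definition Lip_policies :: "nat \<Rightarrow> real \<Rightarrow> (nat \<Rightarrow> nat \<Rightarrow> 'x::finite \<Rightarrow> (nat \<Rightarrow> 'x pmf) \<Rightarrow> 'u::finite pmf) set" where
  "Lip_policies K LQ = {pol. \<forall>t k x mu1 mu2. k < K \<longrightarrow>
      l1_pmf (pol t k x mu1) (pol t k x mu2) \<le> LQ * distK K mu1 mu2}"

end

theory Submission
  imports Defs
begin

lemma integral_bind_pmf:
  fixes f :: "_ \<Rightarrow> real" assumes "\<And>x. \<bar>f x\<bar> \<le> B"
  shows "measure_pmf.expectation (bind_pmf M N) f = measure_pmf.expectation M (\<lambda>x. measure_pmf.expectation (N x) f)"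
  unfolding measure_pmf_bind
  apply (rule integral_bind[where K="count_space UNIV" and B=B and B'=1])
  using assms by (auto simp: measure_pmf.emeasure_space_1 space_subprob_algebra subprob_space_measure_pmf)

lemma bint:
  fixes f :: "_ \<Rightarrow> real" assumes "\<And>x. \<bar>f x\<bar> \<le> B"
  shows "integrable (measure_pmf M) f"
  by (rule measure_pmf.integrable_const_bound[where B=B]) (use assms in auto)

lemma E_fin:
  fixes f :: "'a::finite \<Rightarrow> real"
  shows "measure_pmf.expectation p f = (\<Sum>x\<in>UNIV. f x * pmf p x)"
  by (rule integral_measure_pmf_real) auto

lemma pmf_bind_fin:
  fixes p :: "'a::finite pmf"
  shows "pmf (bind_pmf p f) y = (\<Sum>x\<in>UNIV. pmf p x * pmf (f x) y)"
  by (simp add: pmf_bind E_fin mult.commute)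

lemma sum_pmf_UNIV: "(\<Sum>x\<in>(UNIV::'a::finite set). pmf p x) = 1"
  by (rule sum_pmf_eq_1) auto

lemma finite_set_Pi_pmf:
  assumes "finite A"
  shows "finite (set_pmf (Pi_pmf A d (Q :: _ \<Rightarrow> 'b::finite pmf)))"
  using assms by (simp add: set_Pi_pmf finite_PiE_dflt)

lemma Pi_pmf_pair:
  assumes "finite A" "i \<in> A" "j \<in> A" "i \<noteq> j"
  shows "map_pmf (\<lambda>c. (c i, c j)) (Pi_pmf A d Q) = pair_pmf (Q i) (Q j)"
proof -
  have "Pi_pmf {i,j} d Q = map_pmf (\<lambda>f x. if x \<in> {i,j} then f x else d) (Pi_pmf A d Q)"
    using assms by (intro Pi_pmf_subset) auto
  hence "map_pmf (\<lambda>c. (c i, c j)) (Pi_pmf A d Q) = map_pmf (\<lambda>c. (c i, c j)) (Pi_pmf {i,j} d Q)"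
    by (simp add: pmf.map_comp o_def)
  also have "Pi_pmf {i,j} d Q = map_pmf (\<lambda>(y,f). f(i:=y)) (pair_pmf (Q i) (Pi_pmf {j} d Q))"
    using assms by (subst Pi_pmf_insert[symmetric]) auto
  also have "map_pmf (\<lambda>c. (c i, c j)) \<dots> = map_pmf (\<lambda>(a, b). (id a, (\<lambda>f. f j) b)) (pair_pmf (Q i) (Pi_pmf {j} d Q))"
    using assms by (simp add: pmf.map_comp o_def case_prod_unfold)
  also have "\<dots> = pair_pmf (Q i) (Q j)"
    by (subst map_pair) (simp add: Pi_pmf_component)
  finally show ?thesis .
qed

lemma E_pair_prod:
  fixes F G :: "'a::finite \<Rightarrow> real"
  shows "measure_pmf.expectation (pair_pmf p q) (\<lambda>(x,y). F x * G y) =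
    measure_pmf.expectation p F * measure_pmf.expectation q G"
proof -
  have "measure_pmf.expectation p F * measure_pmf.expectation q G =
     (\<Sum>x\<in>UNIV. \<Sum>y\<in>UNIV. (F x * G y) * pmf (pair_pmf p q) (x,y))"
    by (simp add: E_fin pmf_pair sum_product algebra_simps)
  also have "\<dots> = (\<Sum>z\<in>UNIV \<times> UNIV. (case z of (x,y) \<Rightarrow> F x * G y) * pmf (pair_pmf p q) z)"
    by (subst sum.cartesian_product) (auto intro!: sum.cong)
  also have "\<dots> = measure_pmf.expectation (pair_pmf p q) (\<lambda>(x,y). F x * G y)"
    by (simp add: E_fin)
  finally show ?thesis by simp
qed

lemma sum_sqrt_le:
  fixes v :: "_ \<Rightarrow> real"
  assumes "finite I" "\<And>i. i \<in> I \<Longrightarrow> v i \<ge> 0"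
  shows "(\<Sum>i\<in>I. sqrt (v i)) \<le> sqrt (card I * (\<Sum>i\<in>I. v i))"
proof -
  have "(\<Sum>i\<in>I. 1 * sqrt (v i))\<^sup>2 \<le> (\<Sum>i\<in>I. 1\<^sup>2) * (\<Sum>i\<in>I. (sqrt (v i))\<^sup>2)"
    by (rule Cauchy_Schwarz_ineq_sum)
  also have "\<dots> = card I * (\<Sum>i\<in>I. v i)" using assms by simp
  finally have "(\<Sum>i\<in>I. sqrt (v i))\<^sup>2 \<le> card I * (\<Sum>i\<in>I. v i)" by simp
  thus ?thesis by (rule real_le_rsqrt)
qed

lemma E_abs_le_sqrt:
  fixes Y :: "_ \<Rightarrow> real"
  assumes "\<And>x. \<bar>Y x\<bar> \<le> B"
  shows "measure_pmf.expectation M (\<lambda>x. \<bar>Y x\<bar>) \<le> sqrt (measure_pmf.expectation M (\<lambda>x. (Y x)\<^sup>2))"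
proof -
  define m where "m = measure_pmf.expectation M (\<lambda>x. \<bar>Y x\<bar>)"
  have B: "B \<ge> 0" using assms[of undefined] by linarith
  have i1: "integrable M (\<lambda>x. \<bar>Y x\<bar>)" by (rule bint[where B=B]) (use assms in auto)
  have i2: "integrable M (\<lambda>x. (Y x)\<^sup>2)"
  proof (rule bint[where B="B*B"])
    fix x
    have "\<bar>Y x\<bar> * \<bar>Y x\<bar> \<le> B * B" by (rule mult_mono) (use assms B in auto)
    thus "\<bar>(Y x)\<^sup>2\<bar> \<le> B * B" by (simp add: power2_eq_square abs_mult)
  qed
  have "0 \<le> measure_pmf.expectation M (\<lambda>x. (\<bar>Y x\<bar> - m)\<^sup>2)" by simp
  also have "(\<lambda>x. (\<bar>Y x\<bar> - m)\<^sup>2) = (\<lambda>x. (Y x)\<^sup>2 - 2 * m * \<bar>Y x\<bar> + m\<^sup>2)"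
    by (auto simp: power2_eq_square algebra_simps)
  also have "measure_pmf.expectation M \<dots> = measure_pmf.expectation M (\<lambda>x. (Y x)\<^sup>2 - 2 * m * \<bar>Y x\<bar>) + m\<^sup>2"
    by (subst Bochner_Integration.integral_add) (use i1 i2 in auto)
  also have "measure_pmf.expectation M (\<lambda>x. (Y x)\<^sup>2 - 2 * m * \<bar>Y x\<bar>) = measure_pmf.expectation M (\<lambda>x. (Y x)\<^sup>2) - measure_pmf.expectation M (\<lambda>x. 2 * m * \<bar>Y x\<bar>)"
    by (rule Bochner_Integration.integral_diff) (use i1 i2 in auto)
  also have "measure_pmf.expectation M (\<lambda>x. 2 * m * \<bar>Y x\<bar>) = 2 * m * m"
    unfolding m_def by (rule integral_mult_right_zero)
  finally have "m\<^sup>2 \<le> measure_pmf.expectation M (\<lambda>x. (Y x)\<^sup>2)" by (simp add: power2_eq_square)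
  moreover have "m \<ge> 0" unfolding m_def by simp
  ultimately show ?thesis unfolding m_def[symmetric] by (simp add: real_le_rsqrt)
qed


lemma mean0:
  fixes p :: "'z::finite pmf"
  shows "measure_pmf.expectation p (\<lambda>x. indicator {z} x - pmf p z) = 0"
proof -
  have "(\<Sum>x\<in>UNIV. (indicator {z} x - pmf p z) * pmf p x) = (\<Sum>x\<in>UNIV. indicator {z} x * pmf p x) - pmf p z * (\<Sum>x\<in>UNIV. pmf p x)"
    by (simp add: algebra_simps sum_subtractf sum_distrib_left)
  also have "(\<Sum>x\<in>UNIV. indicator {z} x * pmf p x) = pmf p z"
    by (simp add: indicator_def)
  finally show ?thesis by (simp add: E_fin sum_pmf_UNIV)
qed

lemma var_le:
  fixes p :: "'z::finite pmf"
  shows "measure_pmf.expectation p (\<lambda>x. (indicator {z} x - pmf p z)\<^sup>2) \<le> pmf p z"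
proof -
  let ?q = "pmf p z"
  have eq: "(indicator {z} x - ?q)\<^sup>2 = indicator {z} x * (1 - 2 * ?q) + ?q\<^sup>2" for x :: 'z
    by (cases "x = z") (auto simp: power2_eq_square algebra_simps)
  have s1: "(\<Sum>x\<in>UNIV. indicator {z} x * pmf p x) = ?q"
    by (simp add: indicator_def)
  have "(\<Sum>x\<in>UNIV. (indicator {z} x - ?q)\<^sup>2 * pmf p x) = (\<Sum>x\<in>UNIV. (1 - 2 * ?q) * (indicator {z} x * pmf p x) + ?q\<^sup>2 * pmf p x)"
    unfolding eq by (intro sum.cong) (auto simp: algebra_simps)
  also have "\<dots> = (1 - 2 * ?q) * (\<Sum>x\<in>UNIV. indicator {z} x * pmf p x) + ?q\<^sup>2 * (\<Sum>x\<in>UNIV. pmf p x)"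
    by (simp only: sum.distrib sum_distrib_left)
  also have "\<dots> = (1 - 2 * ?q) * ?q + ?q\<^sup>2 * 1"
    by (simp only: s1 sum_pmf_UNIV)
  finally have s2: "(\<Sum>x\<in>UNIV. (indicator {z} x - ?q)\<^sup>2 * pmf p x) = (1 - 2 * ?q) * ?q + ?q\<^sup>2 * 1" .
  have "measure_pmf.expectation p (\<lambda>x. (indicator {z} x - pmf p z)\<^sup>2) = (1 - 2 * ?q) * ?q + ?q\<^sup>2 * 1"
    unfolding E_fin s2 ..
  moreover have "(1 - 2 * ?q) * ?q + ?q\<^sup>2 * 1 \<le> ?q"
    using zero_le_square[of ?q] by (simp add: power2_eq_square algebra_simps)
  ultimately show ?thesis by linarith
qed

lemma conc:
  fixes Q :: "'i \<Rightarrow> 'b::finite pmf" and g :: "'i \<Rightarrow> 'b \<Rightarrow> 'z::finite"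
  assumes A: "finite A" and J: "J \<subseteq> A" "J \<noteq> {}"
  shows "measure_pmf.expectation (Pi_pmf A d Q)
     (\<lambda>c. \<Sum>z\<in>UNIV. \<bar>\<Sum>i\<in>J. (indicator {z} (g i (c i)) - pmf (map_pmf (g i) (Q i)) z)\<bar> / card J)
     \<le> sqrt (CARD('z) / card J)"
proof -
  define M where "M = Pi_pmf A d Q"
  define p where "p i = map_pmf (g i) (Q i)" for i
  define Z where "Z i z c = (indicator {z} (g i (c i)) - pmf (p i) z :: real)" for i z and c :: "'i \<Rightarrow> 'b"
  have finJ: "finite J" using A J finite_subset by blast
  have fin: "finite (set_pmf M)" unfolding M_def by (rule finite_set_Pi_pmf[OF A])
  have int: "integrable (measure_pmf M) f" for f :: "_ \<Rightarrow> real"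
    by (rule integrable_measure_pmf_finite[OF fin])
  have marg: "measure_pmf.expectation M (\<lambda>c. F (g i (c i))) = measure_pmf.expectation (p i) F"
    if "i \<in> A" for i and F :: "'z \<Rightarrow> real"
  proof -
    have "map_pmf (\<lambda>c. g i (c i)) M = map_pmf (g i) (map_pmf (\<lambda>c. c i) M)"
      by (simp add: pmf.map_comp o_def)
    also have "\<dots> = p i" using that A by (simp add: M_def Pi_pmf_component p_def)
    finally have "map_pmf (\<lambda>c. g i (c i)) M = p i" .
    hence "measure_pmf.expectation (map_pmf (\<lambda>c. g i (c i)) M) F = measure_pmf.expectation (p i) F" by simp
    thus ?thesis by simp
  qed
  have pairE: "measure_pmf.expectation M (\<lambda>c. F (g i (c i)) * G (g j (c j))) =
      measure_pmf.expectation (p i) F * measure_pmf.expectation (p j) G"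
    if "i \<in> A" "j \<in> A" "i \<noteq> j" for i j and F G :: "'z \<Rightarrow> real"
  proof -
    have "map_pmf (\<lambda>c. (g i (c i), g j (c j))) M = map_pmf (\<lambda>(a, b). (g i a, g j b)) (map_pmf (\<lambda>c. (c i, c j)) M)"
      by (simp add: pmf.map_comp o_def)
    also have "\<dots> = pair_pmf (p i) (p j)" using that A
      by (simp add: M_def Pi_pmf_pair map_pair p_def)
    finally have e: "map_pmf (\<lambda>c. (g i (c i), g j (c j))) M = pair_pmf (p i) (p j)" .
    have "measure_pmf.expectation M (\<lambda>c. F (g i (c i)) * G (g j (c j))) =
       measure_pmf.expectation (map_pmf (\<lambda>c. (g i (c i), g j (c j))) M) (\<lambda>(x,y). F x * G y)"
      by simp
    also have "\<dots> = measure_pmf.expectation (p i) F * measure_pmf.expectation (p j) G"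
      unfolding e by (rule E_pair_prod)
    finally show ?thesis .
  qed
  have cross: "measure_pmf.expectation M (\<lambda>c. Z i z c * Z j z c) = (if i = j then measure_pmf.expectation (p i) (\<lambda>x. (indicator {z} x - pmf (p i) z)\<^sup>2) else 0)"
    if "i \<in> A" "j \<in> A" for i j z
  proof (cases "i = j")
    case True
    then show ?thesis using marg[OF that(1), of "\<lambda>x. (indicator {z} x - pmf (p i) z)\<^sup>2"]
      by (simp add: Z_def power2_eq_square)
  next
    case False
    then show ?thesis using pairE[OF that False, of "\<lambda>x. indicator {z} x - pmf (p i) z" "\<lambda>x. indicator {z} x - pmf (p j) z"]
      by (simp add: Z_def mean0)
  qed
  have sq: "measure_pmf.expectation M (\<lambda>c. (\<Sum>i\<in>J. Z i z c)\<^sup>2) \<le> (\<Sum>i\<in>J. pmf (p i) z)" for z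
  proof -
    have "measure_pmf.expectation M (\<lambda>c. (\<Sum>i\<in>J. Z i z c)\<^sup>2) = measure_pmf.expectation M (\<lambda>c. \<Sum>i\<in>J. \<Sum>j\<in>J. Z i z c * Z j z c)"
      by (simp add: power2_eq_square sum_product)
    also have "\<dots> = (\<Sum>i\<in>J. \<Sum>j\<in>J. measure_pmf.expectation M (\<lambda>c. Z i z c * Z j z c))"
      by (simp add: Bochner_Integration.integral_sum int)
    also have "\<dots> = (\<Sum>i\<in>J. measure_pmf.expectation (p i) (\<lambda>x. (indicator {z} x - pmf (p i) z)\<^sup>2))"
    proof (rule sum.cong[OF refl])
      fix i assume i: "i \<in> J"
      have "(\<Sum>j\<in>J. measure_pmf.expectation M (\<lambda>c. Z i z c * Z j z c)) =
         (\<Sum>j\<in>J. if i = j then measure_pmf.expectation (p i) (\<lambda>x. (indicator {z} x - pmf (p i) z)\<^sup>2) else 0)"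
        using i J by (intro sum.cong refl cross) auto
      also have "\<dots> = measure_pmf.expectation (p i) (\<lambda>x. (indicator {z} x - pmf (p i) z)\<^sup>2)"
        using i finJ by simp
      finally show "(\<Sum>j\<in>J. measure_pmf.expectation M (\<lambda>c. Z i z c * Z j z c)) = measure_pmf.expectation (p i) (\<lambda>x. (indicator {z} x - pmf (p i) z)\<^sup>2)" .
    qed
    also have "\<dots> \<le> (\<Sum>i\<in>J. pmf (p i) z)"
      by (intro sum_mono var_le)
    finally show ?thesis .
  qed
  have bZ: "\<bar>\<Sum>i\<in>J. Z i z c\<bar> \<le> card J" for z c
  proof -
    have "\<bar>\<Sum>i\<in>J. Z i z c\<bar> \<le> (\<Sum>i\<in>J. \<bar>Z i z c\<bar>)" by (rule sum_abs)
    also have "\<dots> \<le> (\<Sum>i\<in>J. 1)"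
      by (intro sum_mono) (auto simp: Z_def indicator_def pmf_le_1)
    finally show ?thesis by simp
  qed
  have ab: "measure_pmf.expectation M (\<lambda>c. \<bar>\<Sum>i\<in>J. Z i z c\<bar>) \<le> sqrt (\<Sum>i\<in>J. pmf (p i) z)" for z
  proof -
    have "measure_pmf.expectation M (\<lambda>c. \<bar>\<Sum>i\<in>J. Z i z c\<bar>) \<le> sqrt (measure_pmf.expectation M (\<lambda>c. (\<Sum>i\<in>J. Z i z c)\<^sup>2))"
      by (rule E_abs_le_sqrt[OF bZ])
    also have "\<dots> \<le> sqrt (\<Sum>i\<in>J. pmf (p i) z)"
      using sq by simp
    finally show ?thesis .
  qed
  have n0: "card J > 0" using finJ J by (simp add: card_gt_0_iff)
  have "measure_pmf.expectation M (\<lambda>c. \<Sum>z\<in>UNIV. \<bar>\<Sum>i\<in>J. Z i z c\<bar> / card J) =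
      (\<Sum>z\<in>UNIV. measure_pmf.expectation M (\<lambda>c. \<bar>\<Sum>i\<in>J. Z i z c\<bar>)) / card J"
    by (simp add: Bochner_Integration.integral_sum int sum_divide_distrib)
  also have "\<dots> \<le> (\<Sum>z\<in>(UNIV::'z set). sqrt (\<Sum>i\<in>J. pmf (p i) z)) / card J"
    using n0 by (intro divide_right_mono sum_mono ab) auto
  also have "\<dots> \<le> sqrt (CARD('z) * (\<Sum>z\<in>UNIV. \<Sum>i\<in>J. pmf (p i) z)) / card J"
    by (intro divide_right_mono sum_sqrt_le) (auto intro: sum_nonneg)
  also have "(\<Sum>z\<in>UNIV. \<Sum>i\<in>J. pmf (p i) z) = card J"
    by (subst sum.swap) (simp add: sum_pmf_UNIV)
  also have "sqrt (CARD('z) * real (card J)) / card J = sqrt (CARD('z) / card J)"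
    using n0 by (simp add: real_sqrt_mult real_sqrt_divide field_simps)
  finally show ?thesis by (simp add: M_def Z_def p_def)
qed


lemma integral_bind_fin:
  fixes f :: "'b::finite \<Rightarrow> real"
  shows "measure_pmf.expectation (bind_pmf M N) f = measure_pmf.expectation M (\<lambda>x. measure_pmf.expectation (N x) f)"
  by (rule integral_bind_pmf[where B="\<Sum>y\<in>UNIV. \<bar>f y\<bar>"]) (rule member_le_sum, auto)

lemma E_le:
  fixes f :: "_ \<Rightarrow> real"
  assumes "\<And>x. f x \<le> c" "\<And>x. \<bar>f x\<bar> \<le> B"
  shows "measure_pmf.expectation p f \<le> c"
proof -
  have "measure_pmf.expectation p f \<le> measure_pmf.expectation p (\<lambda>x. c)"
    by (rule integral_mono[OF bint[OF assms(2)]]) (auto simp: assms(1))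
  thus ?thesis by simp
qed

lemma l1_nonneg: "0 \<le> l1_pmf p q"
  by (simp add: l1_pmf_def sum_nonneg)

lemma l1_sym: "l1_pmf p q = l1_pmf q p"
  by (simp add: l1_pmf_def abs_minus_commute)

lemma l1_self [simp]: "l1_pmf p p = 0"
  by (simp add: l1_pmf_def)

lemma l1_tri: "l1_pmf p r \<le> l1_pmf p q + l1_pmf q r"
  unfolding l1_pmf_def sum.distrib[symmetric] by (intro sum_mono) linarith

lemma l1_le2: "l1_pmf p q \<le> 2"
proof -
  have "l1_pmf p q \<le> (\<Sum>a\<in>UNIV. pmf p a + pmf q a)"
    unfolding l1_pmf_def by (intro sum_mono) (simp add: abs_le_iff pmf_nonneg add_increasing add_increasing2)
  also have "\<dots> = 2" by (simp add: sum.distrib sum_pmf_UNIV)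
  finally show ?thesis .
qed

lemma l1_abs_le: "\<bar>l1_pmf p q\<bar> \<le> 2"
  using l1_nonneg[of p q] l1_le2[of p q] by simp

lemma l1_bind_left:
  fixes p q :: "'a::finite pmf" and f :: "'a \<Rightarrow> 'b::finite pmf"
  shows "l1_pmf (bind_pmf p f) (bind_pmf q f) \<le> l1_pmf p q"
proof -
  have "l1_pmf (bind_pmf p f) (bind_pmf q f) = (\<Sum>y\<in>UNIV. \<bar>\<Sum>x\<in>UNIV. (pmf p x - pmf q x) * pmf (f x) y\<bar>)"
    unfolding l1_pmf_def pmf_bind_fin by (simp add: sum_subtractf algebra_simps)
  also have "\<dots> \<le> (\<Sum>y\<in>UNIV. \<Sum>x\<in>UNIV. \<bar>pmf p x - pmf q x\<bar> * pmf (f x) y)"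
    by (intro sum_mono order.trans[OF sum_abs]) (simp add: abs_mult)
  also have "\<dots> = (\<Sum>x\<in>UNIV. \<bar>pmf p x - pmf q x\<bar> * (\<Sum>y\<in>UNIV. pmf (f x) y))"
    by (subst sum.swap) (simp add: sum_distrib_left)
  also have "\<dots> = l1_pmf p q" by (simp add: sum_pmf_UNIV l1_pmf_def)
  finally show ?thesis .
qed

lemma l1_map:
  fixes p q :: "'a::finite pmf" and h :: "'a \<Rightarrow> 'b::finite"
  shows "l1_pmf (map_pmf h p) (map_pmf h q) \<le> l1_pmf p q"
  unfolding map_pmf_def by (rule l1_bind_left)

lemma pmf_diff_abs: "\<bar>pmf p x - pmf q y\<bar> \<le> 1"
  using pmf_le_1[of p x] pmf_le_1[of q y] pmf_nonneg[of p x] pmf_nonneg[of q y] by linarith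

lemma l1_bind_right:
  fixes p :: "'c pmf" and f g :: "'c \<Rightarrow> 'b::finite pmf"
  shows "l1_pmf (bind_pmf p f) (bind_pmf p g) \<le> measure_pmf.expectation p (\<lambda>x. l1_pmf (f x) (g x))"
proof -
  have i: "integrable (measure_pmf p) (\<lambda>x. pmf (f x) y)" "integrable (measure_pmf p) (\<lambda>x. pmf (g x) y)" for y
    by (rule bint[where B=1]; simp add: pmf_le_1)+
  have "l1_pmf (bind_pmf p f) (bind_pmf p g) = (\<Sum>y\<in>UNIV. \<bar>measure_pmf.expectation p (\<lambda>x. pmf (f x) y - pmf (g x) y)\<bar>)"
    unfolding l1_pmf_def pmf_bind by (simp add: Bochner_Integration.integral_diff[OF i])
  also have "\<dots> \<le> (\<Sum>y\<in>UNIV. measure_pmf.expectation p (\<lambda>x. \<bar>pmf (f x) y - pmf (g x) y\<bar>))"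
    by (intro sum_mono integral_abs_bound)
  also have "\<dots> = measure_pmf.expectation p (\<lambda>x. l1_pmf (f x) (g x))"
    unfolding l1_pmf_def
    by (rule Bochner_Integration.integral_sum[symmetric], rule bint[where B=1]) (simp add: pmf_diff_abs)
  finally show ?thesis .
qed

lemma E_diff_le:
  fixes p q :: "'a::finite pmf" and h :: "'a \<Rightarrow> real"
  assumes "\<And>x. \<bar>h x\<bar> \<le> B"
  shows "\<bar>measure_pmf.expectation p h - measure_pmf.expectation q h\<bar> \<le> B * l1_pmf p q"
proof -
  have "\<bar>measure_pmf.expectation p h - measure_pmf.expectation q h\<bar> = \<bar>\<Sum>x\<in>UNIV. h x * (pmf p x - pmf q x)\<bar>"
    by (simp add: E_fin sum_subtractf algebra_simps)
  also have "\<dots> \<le> (\<Sum>x\<in>UNIV. \<bar>h x\<bar> * \<bar>pmf p x - pmf q x\<bar>)"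
    by (rule order.trans[OF sum_abs]) (simp add: abs_mult)
  also have "\<dots> \<le> (\<Sum>x\<in>UNIV. B * \<bar>pmf p x - pmf q x\<bar>)"
    by (intro sum_mono mult_right_mono assms) auto
  finally show ?thesis by (simp add: l1_pmf_def sum_distrib_left)
qed

lemma distK_nonneg: "0 \<le> distK K m1 m2"
  by (simp add: distK_def sum_nonneg l1_nonneg)

lemma distK_self [simp]: "distK K m m = 0"
  by (simp add: distK_def)

lemma distK_tri: "distK K m1 m3 \<le> distK K m1 m2 + distK K m2 m3"
  unfolding distK_def sum.distrib[symmetric] by (intro sum_mono l1_tri)

lemma distK_le: "distK K m1 m2 \<le> 2 * K"
proof -
  have "distK K m1 m2 \<le> (\<Sum>k<K. 2)" unfolding distK_def by (intro sum_mono l1_le2)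
  thus ?thesis by simp
qed

lemma distK_abs_le: "\<bar>distK K m1 m2\<bar> \<le> 2 * K"
  using distK_nonneg[of K m1 m2] distK_le[of K m1 m2] by simp

definition jMF :: "(nat \<Rightarrow> 'x pmf) \<Rightarrow> (nat \<Rightarrow> 'x \<Rightarrow> (nat \<Rightarrow> 'x pmf) \<Rightarrow> 'u pmf) \<Rightarrow> nat \<Rightarrow> ('x \<times> 'u) pmf" where
  "jMF mu dr k = bind_pmf (mu k) (\<lambda>x. map_pmf (Pair x) (dr k x mu))"

lemma nu_MF_jMF: "nu_MF mu dr k = map_pmf snd (jMF mu dr k)"
  by (simp add: nu_MF_def jMF_def map_bind_pmf pmf.map_comp o_def)

lemma P_MF_jMF: "P_MF P mu dr k = bind_pmf (jMF mu dr k) (\<lambda>(x,u). P k x u mu (nu_MF mu dr))"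
  by (simp add: P_MF_def jMF_def bind_assoc_pmf bind_map_pmf o_def)

lemma r_MF_jMF: "r_MF r mu dr k = measure_pmf.expectation (jMF mu dr k) (\<lambda>(x,u). r k x u mu (nu_MF mu dr))"
proof -
  have "measure_pmf.expectation (jMF mu dr k) (\<lambda>(x,u). r k x u mu (nu_MF mu dr)) =
      measure_pmf.expectation (mu k) (\<lambda>x. measure_pmf.expectation (dr k x mu) (\<lambda>u. r k x u mu (nu_MF mu dr)))"
    unfolding jMF_def by (simp add: integral_bind_fin)
  also have "\<dots> = (\<Sum>x\<in>UNIV. (\<Sum>u\<in>UNIV. r k x u mu (nu_MF mu dr) * pmf (dr k x mu) u) * pmf (mu k) x)"
    by (simp add: E_fin)
  also have "\<dots> = r_MF r mu dr k"
    unfolding r_MF_def by (intro sum.cong refl) (simp add: sum_distrib_left algebra_simps)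
  finally show ?thesis ..
qed


lemma jMF_lip:
  fixes m1 m2 :: "nat \<Rightarrow> 'x::finite pmf" and dr :: "nat \<Rightarrow> 'x \<Rightarrow> (nat \<Rightarrow> 'x pmf) \<Rightarrow> 'u::finite pmf"
  assumes dr_lip: "\<And>k x m1 m2. k < K \<Longrightarrow> l1_pmf (dr k x m1) (dr k x m2) \<le> LQ * distK K m1 m2"
    and k: "k < K"
  shows "l1_pmf (jMF m1 dr k) (jMF m2 dr k) \<le> l1_pmf (m1 k) (m2 k) + LQ * distK K m1 m2"
proof -
  let ?F1 = "\<lambda>x. map_pmf (Pair x) (dr k x m1)" and ?F2 = "\<lambda>x. map_pmf (Pair x) (dr k x m2)"
  have "l1_pmf (jMF m1 dr k) (jMF m2 dr k) \<le> l1_pmf (bind_pmf (m1 k) ?F1) (bind_pmf (m2 k) ?F1) + l1_pmf (bind_pmf (m2 k) ?F1) (bind_pmf (m2 k) ?F2)"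
    unfolding jMF_def by (rule l1_tri)
  also have "l1_pmf (bind_pmf (m1 k) ?F1) (bind_pmf (m2 k) ?F1) \<le> l1_pmf (m1 k) (m2 k)"
    by (rule l1_bind_left)
  also have "l1_pmf (bind_pmf (m2 k) ?F1) (bind_pmf (m2 k) ?F2) \<le> measure_pmf.expectation (m2 k) (\<lambda>x. l1_pmf (?F1 x) (?F2 x))"
    by (rule l1_bind_right)
  also have "\<dots> \<le> LQ * distK K m1 m2"
    by (rule E_le[where B=2, OF order.trans[OF l1_map dr_lip[OF k]] l1_abs_le])
  finally show ?thesis by simp
qed

lemma nu_lip:
  fixes m1 m2 :: "nat \<Rightarrow> 'x::finite pmf" and dr :: "nat \<Rightarrow> 'x \<Rightarrow> (nat \<Rightarrow> 'x pmf) \<Rightarrow> 'u::finite pmf"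
  assumes dr_lip: "\<And>k x m1 m2. k < K \<Longrightarrow> l1_pmf (dr k x m1) (dr k x m2) \<le> LQ * distK K m1 m2"
  shows "distK K (nu_MF m1 dr) (nu_MF m2 dr) \<le> (1 + K * LQ) * distK K m1 m2"
proof -
  have "distK K (nu_MF m1 dr) (nu_MF m2 dr) \<le> (\<Sum>k<K. l1_pmf (m1 k) (m2 k) + LQ * distK K m1 m2)"
    unfolding distK_def[of K "nu_MF m1 dr"] nu_MF_jMF
    by (intro sum_mono order.trans[OF l1_map jMF_lip[OF dr_lip]]) auto
  also have "\<dots> = (1 + K * LQ) * distK K m1 m2"
    by (simp add: sum.distrib distK_def algebra_simps)
  finally show ?thesis .
qed

lemma PMF_lip:
  fixes m1 m2 :: "nat \<Rightarrow> 'x::finite pmf" and dr :: "nat \<Rightarrow> 'x \<Rightarrow> (nat \<Rightarrow> 'x pmf) \<Rightarrow> 'u::finite pmf"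
  assumes dr_lip: "\<And>k x m1 m2. k < K \<Longrightarrow> l1_pmf (dr k x m1) (dr k x m2) \<le> LQ * distK K m1 m2"
    and P_lip: "\<And>k x u mu1 nu1 mu2 nu2. k < K \<Longrightarrow>
        l1_pmf (P k x u mu1 nu1) (P k x u mu2 nu2) \<le> LP * (distK K mu1 mu2 + distK K nu1 nu2)"
    and LP: "LP \<ge> 0" and LQ: "LQ \<ge> 0"
  shows "distK K (P_MF P m1 dr) (P_MF P m2 dr) \<le> ((1 + K * LQ) + K * LP * (2 + K * LQ)) * distK K m1 m2"
proof -
  let ?d = "distK K m1 m2"
  have nl: "distK K (nu_MF m1 dr) (nu_MF m2 dr) \<le> (1 + K * LQ) * ?d" by (rule nu_lip[OF dr_lip])
  have pk: "l1_pmf (P_MF P m1 dr k) (P_MF P m2 dr k) \<le> l1_pmf (m1 k) (m2 k) + LQ * ?d + LP * (2 + K * LQ) * ?d"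
    if k: "k < K" for k
  proof -
    let ?G1 = "\<lambda>(x,u). P k x u m1 (nu_MF m1 dr)" and ?G2 = "\<lambda>(x,u). P k x u m2 (nu_MF m2 dr)"
    have "l1_pmf (P_MF P m1 dr k) (P_MF P m2 dr k) \<le> l1_pmf (bind_pmf (jMF m1 dr k) ?G1) (bind_pmf (jMF m2 dr k) ?G1) + l1_pmf (bind_pmf (jMF m2 dr k) ?G1) (bind_pmf (jMF m2 dr k) ?G2)"
      unfolding P_MF_jMF by (rule l1_tri)
    also have "l1_pmf (bind_pmf (jMF m1 dr k) ?G1) (bind_pmf (jMF m2 dr k) ?G1) \<le> l1_pmf (m1 k) (m2 k) + LQ * ?d"
      by (rule order.trans[OF l1_bind_left jMF_lip[OF dr_lip k]])
    also have "l1_pmf (bind_pmf (jMF m2 dr k) ?G1) (bind_pmf (jMF m2 dr k) ?G2) \<le> measure_pmf.expectation (jMF m2 dr k) (\<lambda>z. l1_pmf (?G1 z) (?G2 z))"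
      by (rule l1_bind_right)
    also have "\<dots> \<le> LP * (2 + K * LQ) * ?d"
    proof (rule E_le[where B=2, OF _ l1_abs_le])
      fix z :: "'x \<times> 'u"
      have "l1_pmf (?G1 z) (?G2 z) \<le> LP * (?d + distK K (nu_MF m1 dr) (nu_MF m2 dr))"
        using P_lip[OF k] by (simp add: case_prod_unfold)
      also have "\<dots> \<le> LP * (?d + (1 + K * LQ) * ?d)"
        using nl LP by (intro mult_left_mono) auto
      finally show "l1_pmf (?G1 z) (?G2 z) \<le> LP * (2 + K * LQ) * ?d" by (simp add: algebra_simps)
    qed
    finally show ?thesis by simp
  qed
  have "distK K (P_MF P m1 dr) (P_MF P m2 dr) \<le> (\<Sum>k<K. l1_pmf (m1 k) (m2 k) + LQ * ?d + LP * (2 + K * LQ) * ?d)"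
    unfolding distK_def[of K "P_MF P m1 dr"] by (intro sum_mono pk) auto
  also have "\<dots> = ((1 + K * LQ) + K * LP * (2 + K * LQ)) * ?d"
    by (simp add: sum.distrib distK_def algebra_simps)
  finally show ?thesis .
qed

lemma rMF_lip:
  fixes m1 m2 :: "nat \<Rightarrow> 'x::finite pmf" and dr :: "nat \<Rightarrow> 'x \<Rightarrow> (nat \<Rightarrow> 'x pmf) \<Rightarrow> 'u::finite pmf"
  assumes dr_lip: "\<And>k x m1 m2. k < K \<Longrightarrow> l1_pmf (dr k x m1) (dr k x m2) \<le> LQ * distK K m1 m2"
    and r_bound: "\<And>k x u mu nu. k < K \<Longrightarrow> \<bar>r k x u mu nu\<bar> \<le> MR"
    and r_lip: "\<And>k x u mu1 nu1 mu2 nu2. k < K \<Longrightarrow>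
        \<bar>r k x u mu1 nu1 - r k x u mu2 nu2\<bar> \<le> LR * (distK K mu1 mu2 + distK K nu1 nu2)"
    and LR: "LR \<ge> 0" and LQ: "LQ \<ge> 0"
    and w: "\<And>k. k < K \<Longrightarrow> 0 \<le> w k" "(\<Sum>k<K. w k) = 1"
  shows "\<bar>(\<Sum>k<K. w k * r_MF r m1 dr k) - (\<Sum>k<K. w k * r_MF r m2 dr k)\<bar>
     \<le> (MR * (1 + LQ) + LR * (2 + K * LQ)) * distK K m1 m2"
proof -
  let ?d = "distK K m1 m2"
  have nl: "distK K (nu_MF m1 dr) (nu_MF m2 dr) \<le> (1 + K * LQ) * ?d" by (rule nu_lip[OF dr_lip])
  have MR: "MR \<ge> 0"
  proof -
    have "0 < K" using w(2) by (cases K) auto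
    from r_bound[OF this] show ?thesis by (meson abs_ge_zero order.trans)
  qed
  have pk: "\<bar>r_MF r m1 dr k - r_MF r m2 dr k\<bar> \<le> MR * l1_pmf (m1 k) (m2 k) + (MR * LQ + LR * (2 + K * LQ)) * ?d"
    if k: "k < K" for k
  proof -
    let ?h1 = "\<lambda>(x,u). r k x u m1 (nu_MF m1 dr)" and ?h2 = "\<lambda>(x,u). r k x u m2 (nu_MF m2 dr)"
    have b1: "\<bar>?h1 z\<bar> \<le> MR" "\<bar>?h2 z\<bar> \<le> MR" for z using r_bound[OF k] by (auto simp: case_prod_unfold)
    have "\<bar>r_MF r m1 dr k - r_MF r m2 dr k\<bar> \<le> \<bar>measure_pmf.expectation (jMF m1 dr k) ?h1 - measure_pmf.expectation (jMF m2 dr k) ?h1\<bar>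
        + \<bar>measure_pmf.expectation (jMF m2 dr k) ?h1 - measure_pmf.expectation (jMF m2 dr k) ?h2\<bar>"
      unfolding r_MF_jMF by linarith
    also have "\<bar>measure_pmf.expectation (jMF m1 dr k) ?h1 - measure_pmf.expectation (jMF m2 dr k) ?h1\<bar> \<le> MR * l1_pmf (jMF m1 dr k) (jMF m2 dr k)"
      by (rule E_diff_le[OF b1(1)])
    also have "\<dots> \<le> MR * (l1_pmf (m1 k) (m2 k) + LQ * ?d)"
      by (intro mult_left_mono jMF_lip[OF dr_lip k] MR)
    also have "\<bar>measure_pmf.expectation (jMF m2 dr k) ?h1 - measure_pmf.expectation (jMF m2 dr k) ?h2\<bar>
        = \<bar>measure_pmf.expectation (jMF m2 dr k) (\<lambda>z. ?h1 z - ?h2 z)\<bar>"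
      by (simp only: Bochner_Integration.integral_diff[OF bint[OF b1(1)] bint[OF b1(2)]])
    also have "\<dots> \<le> measure_pmf.expectation (jMF m2 dr k) (\<lambda>z. \<bar>?h1 z - ?h2 z\<bar>)"
      by (rule integral_abs_bound)
    also have "\<dots> \<le> LR * (2 + K * LQ) * ?d"
    proof (rule E_le[where B="2 * MR"])
      fix z :: "'x \<times> 'u"
      have "\<bar>?h1 z - ?h2 z\<bar> \<le> LR * (?d + distK K (nu_MF m1 dr) (nu_MF m2 dr))"
        using r_lip[OF k] by (simp add: case_prod_unfold)
      also have "\<dots> \<le> LR * (?d + (1 + K * LQ) * ?d)"
        using nl LR by (intro mult_left_mono) auto
      finally show "\<bar>?h1 z - ?h2 z\<bar> \<le> LR * (2 + K * LQ) * ?d" by (simp add: algebra_simps)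
      show "\<bar>\<bar>?h1 z - ?h2 z\<bar>\<bar> \<le> 2 * MR" using b1[of z] by linarith
    qed
    finally show ?thesis by (simp add: algebra_simps)
  qed
  have wle: "w k \<le> 1" if "k < K" for k
    using member_le_sum[of k "{..<K}" w] w that by auto
  have "\<bar>(\<Sum>k<K. w k * r_MF r m1 dr k) - (\<Sum>k<K. w k * r_MF r m2 dr k)\<bar> = \<bar>\<Sum>k<K. w k * (r_MF r m1 dr k - r_MF r m2 dr k)\<bar>"
    by (simp add: sum_subtractf algebra_simps)
  also have "\<dots> \<le> (\<Sum>k<K. w k * \<bar>r_MF r m1 dr k - r_MF r m2 dr k\<bar>)"
    by (rule order.trans[OF sum_abs]) (simp add: abs_mult w)
  also have "\<dots> \<le> (\<Sum>k<K. w k * (MR * l1_pmf (m1 k) (m2 k) + (MR * LQ + LR * (2 + K * LQ)) * ?d))"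
    by (intro sum_mono mult_left_mono pk w) auto
  also have "\<dots> = (\<Sum>k<K. w k * (MR * l1_pmf (m1 k) (m2 k))) + (\<Sum>k<K. w k) * ((MR * LQ + LR * (2 + K * LQ)) * ?d)"
    by (simp only: distrib_left sum.distrib sum_distrib_right)
  also have "(\<Sum>k<K. w k * (MR * l1_pmf (m1 k) (m2 k))) \<le> (\<Sum>k<K. MR * l1_pmf (m1 k) (m2 k))"
    by (intro sum_mono mult_left_le_one_le mult_nonneg_nonneg MR l1_nonneg wle w) auto
  also have "(\<Sum>k<K. MR * l1_pmf (m1 k) (m2 k)) = MR * ?d"
    by (simp add: distK_def sum_distrib_left)
  finally show ?thesis using w(2) by (simp add: algebra_simps)
qed


lemma pmf_map_unif:
  fixes n :: nat
  assumes "n \<ge> 1"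
  shows "pmf (map_pmf G (pmf_of_set {..<n})) z = (\<Sum>j<n. indicator {z} (G j)) / n"
proof -
  have "0 \<in> {..<n}" using assms by simp
  hence ne: "{..<n} \<noteq> {}" "finite {..<n}" by auto
  show ?thesis unfolding map_pmf_def pmf_bind_pmf_of_set[OF ne]
    by (simp add: indicator_def)
qed

lemma pmf_bind_unif:
  fixes n :: nat
  assumes "n \<ge> 1"
  shows "pmf (bind_pmf (pmf_of_set {..<n}) F) z = (\<Sum>j<n. pmf (F j) z) / n"
proof -
  have "0 \<in> {..<n}" using assms by simp
  hence ne: "{..<n} \<noteq> {}" "finite {..<n}" by auto
  show ?thesis unfolding pmf_bind_pmf_of_set[OF ne] by simp
qed

lemma emp_conc:
  fixes Q :: "nat \<times> nat \<Rightarrow> 'b::finite pmf" and g :: "nat \<times> nat \<Rightarrow> 'b \<Rightarrow> 'z::finite"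
  assumes A: "finite A" and sub: "(\<lambda>j. (k,j)) ` {..<n} \<subseteq> A" and n: "n \<ge> 1"
  shows "measure_pmf.expectation (Pi_pmf A d Q)
     (\<lambda>c. l1_pmf (map_pmf (\<lambda>j. g (k,j) (c (k,j))) (pmf_of_set {..<n}))
                  (bind_pmf (pmf_of_set {..<n}) (\<lambda>j. map_pmf (g (k,j)) (Q (k,j)))))
     \<le> sqrt (CARD('z) / n)"
proof -
  let ?J = "(\<lambda>j. (k,j)) ` {..<n}"
  have inj: "inj_on (\<lambda>j. (k,j)) {..<n}" by (auto simp: inj_on_def)
  have cJ: "card ?J = n" using card_image[OF inj] by simp
  have "(k,0) \<in> ?J" using n by auto
  hence J0: "?J \<noteq> {}" by blast
  have eq: "l1_pmf (map_pmf (\<lambda>j. g (k,j) (c (k,j))) (pmf_of_set {..<n}))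
                  (bind_pmf (pmf_of_set {..<n}) (\<lambda>j. map_pmf (g (k,j)) (Q (k,j))))
     = (\<Sum>z\<in>UNIV. \<bar>\<Sum>i\<in>?J. (indicator {z} (g i (c i)) - pmf (map_pmf (g i) (Q i)) z)\<bar> / card ?J)" for c
  proof -
    have "l1_pmf (map_pmf (\<lambda>j. g (k,j) (c (k,j))) (pmf_of_set {..<n}))
                  (bind_pmf (pmf_of_set {..<n}) (\<lambda>j. map_pmf (g (k,j)) (Q (k,j))))
        = (\<Sum>z\<in>UNIV. \<bar>(\<Sum>j<n. indicator {z} (g (k,j) (c (k,j)))) / n - (\<Sum>j<n. pmf (map_pmf (g (k,j)) (Q (k,j))) z) / n\<bar>)"
      unfolding l1_pmf_def pmf_map_unif[OF n] pmf_bind_unif[OF n] ..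
    also have "\<dots> = (\<Sum>z\<in>UNIV. \<bar>\<Sum>j<n. (indicator {z} (g (k,j) (c (k,j))) - pmf (map_pmf (g (k,j)) (Q (k,j))) z)\<bar> / n)"
      using n by (intro sum.cong refl) (simp add: sum_subtractf diff_divide_distrib[symmetric])
    also have "\<dots> = (\<Sum>z\<in>UNIV. \<bar>\<Sum>i\<in>?J. (indicator {z} (g i (c i)) - pmf (map_pmf (g i) (Q i)) z)\<bar> / card ?J)"
      unfolding cJ by (simp add: sum.reindex[OF inj])
    finally show ?thesis .
  qed
  show ?thesis unfolding eq using conc[OF A sub J0, of d Q g] cJ by simp
qed

definition ej :: "(nat \<Rightarrow> nat) \<Rightarrow> (nat \<times> nat \<Rightarrow> 'x) \<Rightarrow> (nat \<times> nat \<Rightarrow> 'u) \<Rightarrow> nat \<Rightarrow> ('x \<times> 'u) pmf" where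
  "ej N s a k = map_pmf (\<lambda>j. (s (k,j), a (k,j))) (pmf_of_set {..<N k})"

lemma emp_snd: "emp N a k = map_pmf snd (ej N s a k)"
  by (simp add: emp_def ej_def pmf.map_comp o_def)

lemma finite_agents: "finite (agents K N)"
  by (simp add: agents_def)

lemma agents_sub: "k < K \<Longrightarrow> (\<lambda>j. (k,j)) ` {..<N k} \<subseteq> agents K N"
  by (auto simp: agents_def)

lemma jMF_emp:
  "jMF (emp N s) dr k = bind_pmf (pmf_of_set {..<N k}) (\<lambda>j. map_pmf (Pair (s (k,j))) (dr k (s (k,j)) (emp N s)))"
  unfolding jMF_def by (simp add: emp_def[of N s k] bind_map_pmf o_def)

lemma conc_act:
  fixes s :: "nat \<times> nat \<Rightarrow> 'x::finite" and pol :: "nat \<Rightarrow> nat \<Rightarrow> 'x \<Rightarrow> (nat \<Rightarrow> 'x pmf) \<Rightarrow> 'u::finite pmf"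
  assumes k: "k < K" and n: "N k \<ge> 1"
  shows "measure_pmf.expectation (act_pmf K N pol t s) (\<lambda>a. l1_pmf (ej N s a k) (jMF (emp N s) (pol t) k))
     \<le> sqrt (CARD('x) * CARD('u) / N k)"
proof -
  have "measure_pmf.expectation (act_pmf K N pol t s) (\<lambda>a. l1_pmf (ej N s a k) (jMF (emp N s) (pol t) k)) =
    measure_pmf.expectation (Pi_pmf (agents K N) undefined (\<lambda>(k, j). pol t k (s (k, j)) (emp N s)))
     (\<lambda>c. l1_pmf (map_pmf (\<lambda>j. (\<lambda>i u. (s i, u)) (k,j) (c (k,j))) (pmf_of_set {..<N k}))
                  (bind_pmf (pmf_of_set {..<N k}) (\<lambda>j. map_pmf ((\<lambda>i u. (s i, u)) (k,j)) ((\<lambda>(k, j). pol t k (s (k, j)) (emp N s)) (k,j)))))"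
    by (simp add: act_pmf_def ej_def jMF_emp)
  also have "\<dots> \<le> sqrt (CARD('x \<times> 'u) / N k)"
    by (rule emp_conc[OF finite_agents agents_sub[of k K N, OF k] n])
  finally show ?thesis by simp
qed

lemma conc_next:
  fixes s :: "nat \<times> nat \<Rightarrow> 'x::finite" and a :: "nat \<times> nat \<Rightarrow> 'u::finite"
  assumes k: "k < K" and n: "N k \<ge> 1"
  shows "measure_pmf.expectation (next_pmf K N P s a)
      (\<lambda>s'. l1_pmf (emp N s' k) (bind_pmf (pmf_of_set {..<N k}) (\<lambda>j. P k (s (k,j)) (a (k,j)) (emp N s) (emp N a))))
     \<le> sqrt (CARD('x) / N k)"
proof -
  have "measure_pmf.expectation (next_pmf K N P s a)
      (\<lambda>s'. l1_pmf (emp N s' k) (bind_pmf (pmf_of_set {..<N k}) (\<lambda>j. P k (s (k,j)) (a (k,j)) (emp N s) (emp N a)))) =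
    measure_pmf.expectation (Pi_pmf (agents K N) undefined (\<lambda>(k, j). P k (s (k, j)) (a (k, j)) (emp N s) (emp N a)))
     (\<lambda>c. l1_pmf (map_pmf (\<lambda>j. (\<lambda>i x. x) (k,j) (c (k,j))) (pmf_of_set {..<N k}))
                  (bind_pmf (pmf_of_set {..<N k}) (\<lambda>j. map_pmf ((\<lambda>i x. x) (k,j)) ((\<lambda>(k, j). P k (s (k, j)) (a (k, j)) (emp N s) (emp N a)) (k,j)))))"
    by (simp add: next_pmf_def emp_def[of N _ k])
  also have "\<dots> \<le> sqrt (CARD('x) / N k)"
    by (rule emp_conc[OF finite_agents agents_sub[of k K N, OF k] n])
  finally show ?thesis .
qed


lemma E_affine_le:
  fixes f g :: "_ \<Rightarrow> real"
  assumes "\<And>x. f x \<le> c + a * g x" "\<And>x. \<bar>f x\<bar> \<le> Bf" "\<And>x. \<bar>g x\<bar> \<le> Bg"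
  shows "measure_pmf.expectation p f \<le> c + a * measure_pmf.expectation p g"
proof -
  have ig: "integrable (measure_pmf p) g" by (rule bint[OF assms(3)])
  have "measure_pmf.expectation p f \<le> measure_pmf.expectation p (\<lambda>x. c + a * g x)"
    by (rule integral_mono[OF bint[OF assms(2)]]) (use ig assms(1) in auto)
  also have "\<dots> = c + a * measure_pmf.expectation p g"
    using ig by simp
  finally show ?thesis .
qed

lemma E_abs_le:
  fixes h :: "_ \<Rightarrow> real"
  assumes "\<And>x. \<bar>h x\<bar> \<le> B"
  shows "\<bar>measure_pmf.expectation p h\<bar> \<le> B"
  by (rule order.trans[OF integral_abs_bound E_le[where B=B]]) (use assms in auto)

locale setting =
  fixes K :: nat and N :: "nat \<Rightarrow> nat"
    and r :: "nat \<Rightarrow> 'x::finite \<Rightarrow> 'u::finite \<Rightarrow> (nat \<Rightarrow> 'x pmf) \<Rightarrow> (nat \<Rightarrow> 'u pmf) \<Rightarrow> real"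
    and P :: "nat \<Rightarrow> 'x \<Rightarrow> 'u \<Rightarrow> (nat \<Rightarrow> 'x pmf) \<Rightarrow> (nat \<Rightarrow> 'u pmf) \<Rightarrow> 'x pmf"
    and MR LR LP LQ \<gamma> :: real
    and pol :: "nat \<Rightarrow> nat \<Rightarrow> 'x \<Rightarrow> (nat \<Rightarrow> 'x pmf) \<Rightarrow> 'u pmf"
  assumes K_pos: "K \<ge> 1"
    and N_pos: "\<And>k. k < K \<Longrightarrow> N k \<ge> 1"
    and MR_pos: "MR > 0" and LR_pos: "LR > 0" and LP_pos: "LP > 0" and LQ_pos: "LQ > 0"
    and gamma0: "0 \<le> \<gamma>" and gamma1: "\<gamma> < 1"
    and r_bound: "\<And>k x u mu nu. k < K \<Longrightarrow> \<bar>r k x u mu nu\<bar> \<le> MR"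
    and r_lip: "\<And>k x u mu1 nu1 mu2 nu2. k < K \<Longrightarrow>
        \<bar>r k x u mu1 nu1 - r k x u mu2 nu2\<bar> \<le> LR * (distK K mu1 mu2 + distK K nu1 nu2)"
    and P_lip: "\<And>k x u mu1 nu1 mu2 nu2. k < K \<Longrightarrow>
        l1_pmf (P k x u mu1 nu1) (P k x u mu2 nu2) \<le> LP * (distK K mu1 mu2 + distK K nu1 nu2)"
    and SP_cond: "\<gamma> * ((1 + K * LQ) + K * LP * (2 + K * LQ)) < 1"
    and pol_in: "pol \<in> Lip_policies K LQ"
begin

definition "dd = sqrt (CARD('x) * CARD('u)) * (\<Sum>k<K. 1 / sqrt (N k))"
definition "SPc = (1 + K * LQ) + K * LP * (2 + K * LQ)"
definition "SRc = MR * (1 + LQ) + LR * (2 + K * LQ)"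
definition "Dt t s a = (\<Sum>k<K. l1_pmf (ej N s a k) (jMF (emp N s) (pol t) k))"
definition "Rn s a = (\<Sum>k<K. theta K N k * measure_pmf.expectation (ej N s a k) (\<lambda>(x,u). r k x u (emp N s) (emp N a)))"
definition "Rm t mu = (\<Sum>k<K. theta K N k * r_MF r mu (pol t) k)"

lemma dr_lip: "k < K \<Longrightarrow> l1_pmf (pol t k x m1) (pol t k x m2) \<le> LQ * distK K m1 m2"
  using pol_in by (auto simp: Lip_policies_def)

lemma Npop_pos: "Npop K N > 0"
proof -
  have "N 0 \<ge> 1" using N_pos K_pos by auto
  hence "N 0 \<le> Npop K N" unfolding Npop_def using K_pos by (intro member_le_sum) auto
  thus ?thesis using \<open>N 0 \<ge> 1\<close> by linarith
qed

lemma theta_nonneg: "0 \<le> theta K N k"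
  by (simp add: theta_def)

lemma theta_sum: "(\<Sum>k<K. theta K N k) = 1"
proof -
  have e: "(\<Sum>k<K. real (N k)) = real (Npop K N)" by (simp add: Npop_def)
  show ?thesis using Npop_pos by (simp add: theta_def sum_divide_distrib[symmetric] e)
qed

lemma theta_le1: "k < K \<Longrightarrow> theta K N k \<le> 1"
  using member_le_sum[of k "{..<K}" "theta K N"] theta_nonneg theta_sum by auto

lemma Dt_abs: "\<bar>Dt t s a\<bar> \<le> 2 * K"
proof -
  have "0 \<le> Dt t s a" unfolding Dt_def by (intro sum_nonneg l1_nonneg)
  moreover have "Dt t s a \<le> (\<Sum>k<K. 2)" unfolding Dt_def by (intro sum_mono l1_le2)
  ultimately show ?thesis by simp
qed

lemma dd_nonneg: "0 \<le> dd"
  unfolding dd_def by (intro mult_nonneg_nonneg sum_nonneg) auto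

lemma E_Dt: "measure_pmf.expectation (act_pmf K N pol t s) (Dt t s) \<le> dd"
proof -
  have "measure_pmf.expectation (act_pmf K N pol t s) (Dt t s) =
      (\<Sum>k<K. measure_pmf.expectation (act_pmf K N pol t s) (\<lambda>a. l1_pmf (ej N s a k) (jMF (emp N s) (pol t) k)))"
    unfolding Dt_def by (rule Bochner_Integration.integral_sum) (rule bint[OF l1_abs_le])
  also have "\<dots> \<le> (\<Sum>k<K. sqrt (CARD('x) * CARD('u) / N k))"
    by (intro sum_mono conc_act N_pos) auto
  also have "\<dots> = dd"
    unfolding dd_def by (simp add: sum_distrib_left real_sqrt_divide)
  finally show ?thesis .
qed

lemma nu_Dt: "distK K (emp N a) (nu_MF (emp N s) (pol t)) \<le> Dt t s a"
  unfolding distK_def Dt_def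
  by (intro sum_mono) (simp add: emp_snd[of N a _ s] nu_MF_jMF l1_map)

lemma Rm_abs: "\<bar>Rm t mu\<bar> \<le> MR"
proof -
  have "\<bar>Rm t mu\<bar> \<le> (\<Sum>k<K. theta K N k * MR)"
    unfolding Rm_def
    by (rule order.trans[OF sum_abs], intro sum_mono)
       (auto simp: abs_mult theta_nonneg r_MF_jMF intro!: mult_left_mono E_abs_le r_bound simp: case_prod_unfold)
  thus ?thesis by (simp add: sum_distrib_right[symmetric] theta_sum)
qed

lemma Rn_abs: "\<bar>Rn s a\<bar> \<le> MR"
proof -
  have "\<bar>Rn s a\<bar> \<le> (\<Sum>k<K. theta K N k * MR)"
    unfolding Rn_def
    by (rule order.trans[OF sum_abs], intro sum_mono)
       (auto simp: abs_mult theta_nonneg intro!: mult_left_mono E_abs_le r_bound simp: case_prod_unfold)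
  thus ?thesis by (simp add: sum_distrib_right[symmetric] theta_sum)
qed

lemma rew_pt: "\<bar>Rn s a - Rm t (emp N s)\<bar> \<le> (MR + LR) * Dt t s a"
proof -
  let ?nu = "nu_MF (emp N s) (pol t)"
  have pk: "\<bar>measure_pmf.expectation (ej N s a k) (\<lambda>(x,u). r k x u (emp N s) (emp N a)) - r_MF r (emp N s) (pol t) k\<bar>
      \<le> LR * Dt t s a + MR * l1_pmf (ej N s a k) (jMF (emp N s) (pol t) k)" if k: "k < K" for k
  proof -
    let ?ha = "\<lambda>(x,u). r k x u (emp N s) (emp N a)" and ?hm = "\<lambda>(x,u). r k x u (emp N s) ?nu"
    have ba: "\<bar>?ha z\<bar> \<le> MR" and bm: "\<bar>?hm z\<bar> \<le> MR" for z using r_bound[OF k] by (auto simp: case_prod_unfold)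
    have "\<bar>measure_pmf.expectation (ej N s a k) ?ha - r_MF r (emp N s) (pol t) k\<bar> \<le>
        \<bar>measure_pmf.expectation (ej N s a k) ?ha - measure_pmf.expectation (ej N s a k) ?hm\<bar> +
        \<bar>measure_pmf.expectation (ej N s a k) ?hm - measure_pmf.expectation (jMF (emp N s) (pol t) k) ?hm\<bar>"
      unfolding r_MF_jMF by linarith
    also have "\<bar>measure_pmf.expectation (ej N s a k) ?ha - measure_pmf.expectation (ej N s a k) ?hm\<bar> =
        \<bar>measure_pmf.expectation (ej N s a k) (\<lambda>z. ?ha z - ?hm z)\<bar>"
      by (simp only: Bochner_Integration.integral_diff[OF bint[OF ba] bint[OF bm]])
    also have "\<dots> \<le> LR * Dt t s a"
    proof (rule E_abs_le)
      fix z :: "'x \<times> 'u"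
      have "\<bar>?ha z - ?hm z\<bar> \<le> LR * (distK K (emp N s) (emp N s) + distK K (emp N a) ?nu)"
        using r_lip[OF k, of "fst z" "snd z" "emp N s" "emp N a" "emp N s" ?nu] by (simp add: case_prod_unfold)
      also have "\<dots> \<le> LR * Dt t s a" using nu_Dt LR_pos by (intro mult_left_mono) auto
      finally show "\<bar>?ha z - ?hm z\<bar> \<le> LR * Dt t s a" .
    qed
    also have "\<bar>measure_pmf.expectation (ej N s a k) ?hm - measure_pmf.expectation (jMF (emp N s) (pol t) k) ?hm\<bar>
        \<le> MR * l1_pmf (ej N s a k) (jMF (emp N s) (pol t) k)"
      by (rule E_diff_le[OF bm])
    finally show ?thesis by simp
  qed
  have "\<bar>Rn s a - Rm t (emp N s)\<bar> = \<bar>\<Sum>k<K. theta K N k * (measure_pmf.expectation (ej N s a k) (\<lambda>(x,u). r k x u (emp N s) (emp N a)) - r_MF r (emp N s) (pol t) k)\<bar>"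
    unfolding Rn_def Rm_def by (simp add: sum_subtractf algebra_simps)
  also have "\<dots> \<le> (\<Sum>k<K. theta K N k * (LR * Dt t s a + MR * l1_pmf (ej N s a k) (jMF (emp N s) (pol t) k)))"
    by (rule order.trans[OF sum_abs], intro sum_mono) (auto simp: abs_mult theta_nonneg intro!: mult_left_mono pk)
  also have "\<dots> = (\<Sum>k<K. theta K N k) * (LR * Dt t s a) + (\<Sum>k<K. theta K N k * (MR * l1_pmf (ej N s a k) (jMF (emp N s) (pol t) k)))"
    by (simp only: distrib_left sum.distrib sum_distrib_right)
  also have "(\<Sum>k<K. theta K N k * (MR * l1_pmf (ej N s a k) (jMF (emp N s) (pol t) k))) \<le> (\<Sum>k<K. MR * l1_pmf (ej N s a k) (jMF (emp N s) (pol t) k))"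
    using MR_pos by (intro sum_mono mult_left_le_one_le mult_nonneg_nonneg l1_nonneg theta_nonneg theta_le1) auto
  also have "(\<Sum>k<K. MR * l1_pmf (ej N s a k) (jMF (emp N s) (pol t) k)) = MR * Dt t s a"
    by (simp add: Dt_def sum_distrib_left)
  finally show ?thesis by (simp add: theta_sum algebra_simps)
qed

lemma rew_s: "measure_pmf.expectation (act_pmf K N pol t s) (\<lambda>a. \<bar>Rn s a - Rm t (emp N s)\<bar>) \<le> (MR + LR) * dd"
proof -
  have "measure_pmf.expectation (act_pmf K N pol t s) (\<lambda>a. \<bar>Rn s a - Rm t (emp N s)\<bar>) \<le> 0 + (MR + LR) * measure_pmf.expectation (act_pmf K N pol t s) (Dt t s)"
  proof (rule E_affine_le[where Bf="2 * MR" and Bg="2*K"])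
    fix a
    show "\<bar>Rn s a - Rm t (emp N s)\<bar> \<le> 0 + (MR + LR) * Dt t s a" using rew_pt by simp
    show "\<bar>\<bar>Rn s a - Rm t (emp N s)\<bar>\<bar> \<le> 2 * MR" using Rn_abs[of s a] Rm_abs[of t "emp N s"] by linarith
    show "\<bar>Dt t s a\<bar> \<le> 2 * K" by (rule Dt_abs)
  qed
  also have "\<dots> \<le> (MR + LR) * dd"
    using MR_pos LR_pos E_Dt[of t s] by (simp add: mult_left_mono)
  finally show ?thesis by simp
qed

end

context setting begin

definition "Mt s a k = bind_pmf (pmf_of_set {..<N k}) (\<lambda>j. P k (s (k,j)) (a (k,j)) (emp N s) (emp N a))"

lemma Mt_ej: "Mt s a k = bind_pmf (ej N s a k) (\<lambda>(x,u). P k x u (emp N s) (emp N a))"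
  by (simp add: Mt_def ej_def bind_map_pmf)

lemma SPc_gt1: "SPc > 1"
proof -
  have "real K * LQ > 0" using K_pos LQ_pos by auto
  moreover have "real K * LP * (2 + real K * LQ) \<ge> 0" using LP_pos LQ_pos by auto
  ultimately show ?thesis unfolding SPc_def by linarith
qed

lemma trans_M: "distK K (Mt s a) (P_MF P (emp N s) (pol t)) \<le> (1 + K * LP) * Dt t s a"
proof -
  let ?nu = "nu_MF (emp N s) (pol t)"
  have pk: "l1_pmf (Mt s a k) (P_MF P (emp N s) (pol t) k) \<le> LP * Dt t s a + l1_pmf (ej N s a k) (jMF (emp N s) (pol t) k)"
    if k: "k < K" for k
  proof -
    let ?Ga = "\<lambda>(x,u). P k x u (emp N s) (emp N a)" and ?Gm = "\<lambda>(x,u). P k x u (emp N s) ?nu"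
    have "l1_pmf (Mt s a k) (P_MF P (emp N s) (pol t) k) \<le>
       l1_pmf (bind_pmf (ej N s a k) ?Ga) (bind_pmf (ej N s a k) ?Gm) + l1_pmf (bind_pmf (ej N s a k) ?Gm) (bind_pmf (jMF (emp N s) (pol t) k) ?Gm)"
      unfolding Mt_ej P_MF_jMF by (rule l1_tri)
    also have "l1_pmf (bind_pmf (ej N s a k) ?Ga) (bind_pmf (ej N s a k) ?Gm) \<le> measure_pmf.expectation (ej N s a k) (\<lambda>z. l1_pmf (?Ga z) (?Gm z))"
      by (rule l1_bind_right)
    also have "\<dots> \<le> LP * Dt t s a"
    proof (rule E_le[where B=2, OF _ l1_abs_le])
      fix z :: "'x \<times> 'u"
      have "l1_pmf (?Ga z) (?Gm z) \<le> LP * (distK K (emp N s) (emp N s) + distK K (emp N a) ?nu)"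
        using P_lip[OF k, of "fst z" "snd z" "emp N s" "emp N a" "emp N s" ?nu] by (simp add: case_prod_unfold)
      also have "\<dots> \<le> LP * Dt t s a" using nu_Dt LP_pos by (intro mult_left_mono) auto
      finally show "l1_pmf (?Ga z) (?Gm z) \<le> LP * Dt t s a" .
    qed
    also have "l1_pmf (bind_pmf (ej N s a k) ?Gm) (bind_pmf (jMF (emp N s) (pol t) k) ?Gm) \<le> l1_pmf (ej N s a k) (jMF (emp N s) (pol t) k)"
      by (rule l1_bind_left)
    finally show ?thesis by simp
  qed
  have "distK K (Mt s a) (P_MF P (emp N s) (pol t)) \<le> (\<Sum>k<K. LP * Dt t s a + l1_pmf (ej N s a k) (jMF (emp N s) (pol t) k))"
    unfolding distK_def by (intro sum_mono pk) auto
  also have "\<dots> = (1 + K * LP) * Dt t s a"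
    by (simp add: sum.distrib Dt_def algebra_simps)
  finally show ?thesis .
qed

lemma sumX_le: "(\<Sum>k<K. sqrt (CARD('x) / N k)) \<le> dd"
proof -
  have "(\<Sum>k<K. sqrt (CARD('x) / N k)) \<le> (\<Sum>k<K. sqrt (CARD('x) * CARD('u) / N k))"
    by (intro sum_mono real_sqrt_le_mono divide_right_mono) auto
  also have "\<dots> = dd" unfolding dd_def by (simp add: sum_distrib_left real_sqrt_divide)
  finally show ?thesis .
qed

lemma trans_next:
  "measure_pmf.expectation (next_pmf K N P s a) (\<lambda>s'. distK K (emp N s') mu')
     \<le> ((1 + K * LP) * Dt t s a + distK K (P_MF P (emp N s) (pol t)) mu') + 1 * dd"
proof -
  have "measure_pmf.expectation (next_pmf K N P s a) (\<lambda>s'. distK K (emp N s') mu')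
     \<le> ((1 + K * LP) * Dt t s a + distK K (P_MF P (emp N s) (pol t)) mu') + 1 * measure_pmf.expectation (next_pmf K N P s a) (\<lambda>s'. distK K (emp N s') (Mt s a))"
  proof (rule E_affine_le[where Bf="2*K" and Bg="2*K", OF _ distK_abs_le distK_abs_le])
    fix s' :: "nat \<times> nat \<Rightarrow> 'x"
    have "distK K (emp N s') mu' \<le> distK K (emp N s') (Mt s a) + distK K (Mt s a) mu'" by (rule distK_tri)
    also have "distK K (Mt s a) mu' \<le> distK K (Mt s a) (P_MF P (emp N s) (pol t)) + distK K (P_MF P (emp N s) (pol t)) mu'"
      by (rule distK_tri)
    finally show "distK K (emp N s') mu' \<le> ((1 + K * LP) * Dt t s a + distK K (P_MF P (emp N s) (pol t)) mu') + 1 * distK K (emp N s') (Mt s a)"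
      using trans_M[of s a t] by simp
  qed
  also have "measure_pmf.expectation (next_pmf K N P s a) (\<lambda>s'. distK K (emp N s') (Mt s a)) =
      (\<Sum>k<K. measure_pmf.expectation (next_pmf K N P s a) (\<lambda>s'. l1_pmf (emp N s' k) (Mt s a k)))"
    unfolding distK_def by (rule Bochner_Integration.integral_sum) (rule bint[OF l1_abs_le])
  also have "\<dots> \<le> (\<Sum>k<K. sqrt (CARD('x) / N k))"
    unfolding Mt_def by (intro sum_mono conc_next N_pos) auto
  also have "\<dots> \<le> dd" by (rule sumX_le)
  finally show ?thesis by simp
qed

definition "et x0 mu0 t = measure_pmf.expectation (state_dist K N P pol x0 t) (\<lambda>s. distK K (emp N s) (mf_traj P pol mu0 t))"

lemma et_abs: "\<bar>et x0 mu0 t\<bar> \<le> 2 * K"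
  unfolding et_def by (rule E_abs_le[OF distK_abs_le])

lemma step: "et x0 mu0 (Suc t) \<le> (2 + K * LP) * dd + SPc * et x0 mu0 t"
proof -
  let ?mu = "mf_traj P pol mu0 t"
  have bnd: "\<And>s'. \<bar>distK K (emp N s') (P_MF P ?mu (pol t))\<bar> \<le> 2 * K" by (rule distK_abs_le)
  have bnd2: "\<bar>measure_pmf.expectation (next_pmf K N P s a) (\<lambda>s'. distK K (emp N s') (P_MF P ?mu (pol t)))\<bar> \<le> 2 * K" for s a
    by (rule E_abs_le[OF bnd])
  have drl: "\<And>k x m1 m2. k < K \<Longrightarrow> l1_pmf (pol t k x m1) (pol t k x m2) \<le> LQ * distK K m1 m2"
    by (rule dr_lip)
  have inner: "measure_pmf.expectation (act_pmf K N pol t s) (\<lambda>a. measure_pmf.expectation (next_pmf K N P s a) (\<lambda>s'. distK K (emp N s') (P_MF P ?mu (pol t))))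
      \<le> (2 + K * LP) * dd + SPc * distK K (emp N s) ?mu" for s
  proof -
    have h1: "measure_pmf.expectation (act_pmf K N pol t s) (\<lambda>a. measure_pmf.expectation (next_pmf K N P s a) (\<lambda>s'. distK K (emp N s') (P_MF P ?mu (pol t))))
      \<le> (distK K (P_MF P (emp N s) (pol t)) (P_MF P ?mu (pol t)) + dd) + (1 + K * LP) * measure_pmf.expectation (act_pmf K N pol t s) (Dt t s)"
    proof (rule E_affine_le[where Bf="2*K" and Bg="2*K", OF _ bnd2 Dt_abs])
      fix a
      show "measure_pmf.expectation (next_pmf K N P s a) (\<lambda>s'. distK K (emp N s') (P_MF P ?mu (pol t)))
        \<le> (distK K (P_MF P (emp N s) (pol t)) (P_MF P ?mu (pol t)) + dd) + (1 + K * LP) * Dt t s a"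
        using trans_next[of s a "P_MF P ?mu (pol t)" t] by simp
    qed
    have pl: "distK K (P_MF P (emp N s) (pol t)) (P_MF P ?mu (pol t)) \<le> SPc * distK K (emp N s) ?mu"
      unfolding SPc_def by (rule PMF_lip[OF drl P_lip]) (use LP_pos LQ_pos in auto)
    have h2: "(distK K (P_MF P (emp N s) (pol t)) (P_MF P ?mu (pol t)) + dd) + (1 + K * LP) * measure_pmf.expectation (act_pmf K N pol t s) (Dt t s) \<le> (SPc * distK K (emp N s) ?mu + dd) + (1 + K * LP) * dd"
      using pl E_Dt[of t s] LP_pos by (intro add_mono mult_left_mono) auto
    show ?thesis using h1 h2 by (simp add: algebra_simps)
  qed
  have "et x0 mu0 (Suc t) = measure_pmf.expectation (state_dist K N P pol x0 t)
     (\<lambda>s. measure_pmf.expectation (act_pmf K N pol t s) (\<lambda>a. measure_pmf.expectation (next_pmf K N P s a) (\<lambda>s'. distK K (emp N s') (P_MF P ?mu (pol t)))))"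
    unfolding et_def by (simp add: integral_bind_pmf[OF bnd] integral_bind_pmf[OF bnd2])
  also have "\<dots> \<le> (2 + K * LP) * dd + SPc * et x0 mu0 t"
    unfolding et_def
    by (rule E_affine_le[where Bf="2*K" and Bg="2*K", OF inner E_abs_le[OF bnd2] distK_abs_le])
  finally show ?thesis .
qed

lemma et_bound: "et x0 (emp N x0) t \<le> (2 + K * LP) * dd * (SPc ^ t - 1) / (SPc - 1)"
proof (induction t)
  case 0
  then show ?case by (simp add: et_def)
next
  case (Suc t)
  have SP: "SPc - 1 > 0" using SPc_gt1 by simp
  have "et x0 (emp N x0) (Suc t) \<le> (2 + K * LP) * dd + SPc * et x0 (emp N x0) t" by (rule step)
  also have "\<dots> \<le> (2 + K * LP) * dd + SPc * ((2 + K * LP) * dd * (SPc ^ t - 1) / (SPc - 1))"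
    using Suc SPc_gt1 by (intro add_left_mono mult_left_mono) auto
  also have "\<dots> = (2 + K * LP) * dd * (SPc ^ Suc t - 1) / (SPc - 1)"
    using SP by (simp add: field_simps)
  finally show ?case .
qed

end

context setting begin

lemma summ_geo: "\<lbrakk>\<And>t. \<bar>f t\<bar> \<le> C * \<gamma> ^ t\<rbrakk> \<Longrightarrow> summable (f :: nat \<Rightarrow> real)"
proof -
  assume a: "\<And>t. \<bar>f t\<bar> \<le> C * \<gamma> ^ t"
  have "summable (\<lambda>t. C * \<gamma> ^ t)"
    by (rule summable_mult, rule summable_geometric) (use gamma0 gamma1 in auto)
  thus ?thesis by (rule summable_comparison_test'[where N=0]) (use a in auto)
qed

lemma rew_t:
  "\<bar>measure_pmf.expectation (joint_dist K N P pol x0 t) (\<lambda>(s,a). Rn s a) - Rm t (mf_traj P pol mu0 t)\<bar>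
     \<le> (MR + LR) * dd + SRc * et x0 mu0 t"
proof -
  let ?mu = "mf_traj P pol mu0 t"
  define F where "F s = measure_pmf.expectation (act_pmf K N pol t s) (\<lambda>a. Rn s a)" for s
  have bR: "\<bar>(\<lambda>(s,a). Rn s a) z\<bar> \<le> MR" for z by (simp add: case_prod_unfold Rn_abs)
  have bF: "\<bar>F s\<bar> \<le> MR" for s unfolding F_def by (rule E_abs_le[OF Rn_abs])
  have drl: "\<And>k x m1 m2. k < K \<Longrightarrow> l1_pmf (pol t k x m1) (pol t k x m2) \<le> LQ * distK K m1 m2"
    by (rule dr_lip)
  have pt: "\<bar>F s - Rm t ?mu\<bar> \<le> (MR + LR) * dd + SRc * distK K (emp N s) ?mu" for s
  proof -
    have "\<bar>F s - Rm t (emp N s)\<bar> = \<bar>measure_pmf.expectation (act_pmf K N pol t s) (\<lambda>a. Rn s a - Rm t (emp N s))\<bar>"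
      unfolding F_def by (subst Bochner_Integration.integral_diff[OF bint[OF Rn_abs]]) auto
    also have "\<dots> \<le> measure_pmf.expectation (act_pmf K N pol t s) (\<lambda>a. \<bar>Rn s a - Rm t (emp N s)\<bar>)"
      by (rule integral_abs_bound)
    also have "\<dots> \<le> (MR + LR) * dd" by (rule rew_s)
    finally have 1: "\<bar>F s - Rm t (emp N s)\<bar> \<le> (MR + LR) * dd" .
    have 2: "\<bar>Rm t (emp N s) - Rm t ?mu\<bar> \<le> SRc * distK K (emp N s) ?mu"
      unfolding Rm_def SRc_def
      by (rule rMF_lip[OF drl r_bound r_lip]) (use LR_pos LQ_pos theta_nonneg theta_sum in auto)
    show ?thesis using 1 2 by linarith
  qed
  have "measure_pmf.expectation (joint_dist K N P pol x0 t) (\<lambda>(s,a). Rn s a) = measure_pmf.expectation (state_dist K N P pol x0 t) F"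
    unfolding joint_dist_def F_def by (simp add: integral_bind_pmf[OF bR])
  hence "\<bar>measure_pmf.expectation (joint_dist K N P pol x0 t) (\<lambda>(s,a). Rn s a) - Rm t ?mu\<bar>
      = \<bar>measure_pmf.expectation (state_dist K N P pol x0 t) (\<lambda>s. F s - Rm t ?mu)\<bar>"
    by (subst Bochner_Integration.integral_diff[OF bint[OF bF]]) auto
  also have "\<dots> \<le> measure_pmf.expectation (state_dist K N P pol x0 t) (\<lambda>s. \<bar>F s - Rm t ?mu\<bar>)"
    by (rule integral_abs_bound)
  also have "\<dots> \<le> (MR + LR) * dd + SRc * et x0 mu0 t"
    unfolding et_def
  proof (rule E_affine_le[where Bf="2*MR" and Bg="2*K", OF pt _ distK_abs_le])
    fix s show "\<bar>\<bar>F s - Rm t ?mu\<bar>\<bar> \<le> 2 * MR" using bF[of s] Rm_abs[of t ?mu] by linarith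
  qed
  finally show ?thesis .
qed

lemma agent_sum:
  "(1 / real (Npop K N)) * (\<Sum>(k, j)\<in>agents K N. r k (s (k, j)) (a (k, j)) (emp N s) (emp N a)) = Rn s a"
proof -
  have "(\<Sum>(k, j)\<in>agents K N. r k (s (k, j)) (a (k, j)) (emp N s) (emp N a)) =
      (\<Sum>k<K. \<Sum>j<N k. r k (s (k, j)) (a (k, j)) (emp N s) (emp N a))"
    unfolding agents_def by (subst sum.Sigma) auto
  moreover have "theta K N k * measure_pmf.expectation (ej N s a k) (\<lambda>(x,u). r k x u (emp N s) (emp N a))
      = (1 / real (Npop K N)) * (\<Sum>j<N k. r k (s (k, j)) (a (k, j)) (emp N s) (emp N a))" if k: "k < K" for k
  proof -
    have n: "N k \<ge> 1" by (rule N_pos[OF k])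
    have "0 \<in> {..<N k}" using n by simp
    hence ne: "{..<N k} \<noteq> {}" by blast
    have "measure_pmf.expectation (ej N s a k) (\<lambda>(x,u). r k x u (emp N s) (emp N a)) =
        (\<Sum>j<N k. r k (s (k, j)) (a (k, j)) (emp N s) (emp N a)) / N k"
      unfolding ej_def using ne by (simp add: integral_pmf_of_set)
    thus ?thesis using n by (simp add: theta_def)
  qed
  ultimately show ?thesis
    unfolding Rn_def by (simp add: sum_distrib_left)
qed

lemma vN_eq: "v_N K N \<gamma> r P x0 pol = (\<Sum>t. \<gamma> ^ t * measure_pmf.expectation (joint_dist K N P pol x0 t) (\<lambda>(s,a). Rn s a))"
proof -
  define A where "A i t = \<gamma> ^ t * measure_pmf.expectation (joint_dist K N P pol x0 t)
          (\<lambda>(s, a). r (fst i) (s i) (a i) (emp N s) (emp N a))" for i t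
  have bA: "\<bar>A i t\<bar> \<le> MR * \<gamma> ^ t" if "i \<in> agents K N" for i t
  proof -
    have k: "fst i < K" using that by (auto simp: agents_def)
    have "\<bar>measure_pmf.expectation (joint_dist K N P pol x0 t) (\<lambda>(s, a). r (fst i) (s i) (a i) (emp N s) (emp N a))\<bar> \<le> MR"
      by (rule E_abs_le) (simp add: case_prod_unfold r_bound[OF k])
    hence "\<gamma> ^ t * \<bar>measure_pmf.expectation (joint_dist K N P pol x0 t) (\<lambda>(s, a). r (fst i) (s i) (a i) (emp N s) (emp N a))\<bar> \<le> \<gamma> ^ t * MR"
      by (rule mult_left_mono) (use gamma0 in simp)
    thus ?thesis unfolding A_def using gamma0 by (simp add: abs_mult mult.commute)
  qed
  have sA: "summable (A i)" if "i \<in> agents K N" for i by (rule summ_geo[OF bA[OF that]])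
  have "v_N K N \<gamma> r P x0 pol = (1 / real (Npop K N)) * (\<Sum>i\<in>agents K N. suminf (A i))"
    unfolding v_N_def A_def by (simp add: case_prod_unfold)
  also have "\<dots> = (1 / real (Npop K N)) * (\<Sum>t. \<Sum>i\<in>agents K N. A i t)"
    by (subst suminf_sum[OF sA]) auto
  also have "\<dots> = (\<Sum>t. (1 / real (Npop K N)) * (\<Sum>i\<in>agents K N. A i t))"
    by (rule suminf_mult[symmetric], rule summable_sum[OF sA])
  also have "\<dots> = (\<Sum>t. \<gamma> ^ t * measure_pmf.expectation (joint_dist K N P pol x0 t) (\<lambda>(s,a). Rn s a))"
  proof (rule suminf_cong)
    fix t
    have "(\<Sum>i\<in>agents K N. A i t) = \<gamma> ^ t * measure_pmf.expectation (joint_dist K N P pol x0 t)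
          (\<lambda>(s, a). \<Sum>i\<in>agents K N. r (fst i) (s i) (a i) (emp N s) (emp N a))"
      unfolding A_def sum_distrib_left[symmetric]
      by (subst Bochner_Integration.integral_sum[symmetric])
         (auto simp: case_prod_unfold agents_def intro!: bint[where B=MR] r_bound)
    also have "(\<lambda>(s, a). \<Sum>i\<in>agents K N. r (fst i) (s i) (a i) (emp N s) (emp N a)) =
        (\<lambda>(s, a). real (Npop K N) * Rn s a)"
      using agent_sum Npop_pos by (auto simp: fun_eq_iff case_prod_unfold field_simps)
    finally show "(1 / real (Npop K N)) * (\<Sum>i\<in>agents K N. A i t) = \<gamma> ^ t * measure_pmf.expectation (joint_dist K N P pol x0 t) (\<lambda>(s,a). Rn s a)"
      using Npop_pos by (simp add: case_prod_unfold)
  qed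
  finally show ?thesis .
qed

lemma vMF_eq: "v_MF K N \<gamma> r P mu0 pol = (\<Sum>t. \<gamma> ^ t * Rm t (mf_traj P pol mu0 t))"
proof -
  have rb: "\<bar>r_MF r mu (pol t) k\<bar> \<le> MR" if "k < K" for mu t k
    unfolding r_MF_jMF by (rule E_abs_le) (simp add: case_prod_unfold r_bound[OF that])
  have s: "summable (\<lambda>t. \<gamma> ^ t * r_MF r (mf_traj P pol mu0 t) (pol t) k)" if "k < K" for k
  proof (rule summ_geo[where C=MR])
    fix t
    have "\<gamma> ^ t * \<bar>r_MF r (mf_traj P pol mu0 t) (pol t) k\<bar> \<le> \<gamma> ^ t * MR"
      by (rule mult_left_mono) (use rb[OF that] gamma0 in simp_all)
    thus "\<bar>\<gamma> ^ t * r_MF r (mf_traj P pol mu0 t) (pol t) k\<bar> \<le> MR * \<gamma> ^ t"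
      using gamma0 by (simp add: abs_mult mult.commute)
  qed
  have "v_MF K N \<gamma> r P mu0 pol = (\<Sum>k<K. \<Sum>t. theta K N k * (\<gamma> ^ t * r_MF r (mf_traj P pol mu0 t) (pol t) k))"
    unfolding v_MF_def by (intro sum.cong refl suminf_mult[symmetric] s) auto
  also have "\<dots> = (\<Sum>t. \<Sum>k<K. theta K N k * (\<gamma> ^ t * r_MF r (mf_traj P pol mu0 t) (pol t) k))"
    by (rule suminf_sum[symmetric]) (use s in \<open>auto intro: summable_mult\<close>)
  also have "\<dots> = (\<Sum>t. \<gamma> ^ t * Rm t (mf_traj P pol mu0 t))"
    unfolding Rm_def by (simp add: sum_distrib_left algebra_simps)
  finally show ?thesis .
qed

end

context setting begin

lemma main_bound:
  "\<bar>v_N K N \<gamma> r P x0 pol - v_MF K N \<gamma> r P (emp N x0) pol\<bar>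
    \<le> (MR + LR) * dd / (1 - \<gamma>) + (2 + K * LP) * (SRc / (SPc - 1)) * dd * (1 / (1 - \<gamma> * SPc) - 1 / (1 - \<gamma>))"
proof -
  let ?mu = "\<lambda>t. mf_traj P pol (emp N x0) t"
  define a where "a t = \<gamma> ^ t * measure_pmf.expectation (joint_dist K N P pol x0 t) (\<lambda>(s,a). Rn s a)" for t
  define b where "b t = \<gamma> ^ t * Rm t (?mu t)" for t
  define B where "B = SRc * (2 + K * LP) * dd / (SPc - 1)"
  define g where "g t = (MR + LR) * dd * \<gamma> ^ t + B * ((\<gamma> * SPc) ^ t - \<gamma> ^ t)" for t
  have SP1: "SPc - 1 > 0" using SPc_gt1 by simp
  have gSP: "0 \<le> \<gamma> * SPc" "\<gamma> * SPc < 1" using gamma0 SPc_gt1 SP_cond by (auto simp: SPc_def)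
  have g1: "norm \<gamma> < 1" using gamma0 gamma1 by simp
  have g2: "norm (\<gamma> * SPc) < 1" using gSP by simp
  have SR0: "SRc \<ge> 0" unfolding SRc_def using MR_pos LR_pos LQ_pos by (intro add_nonneg_nonneg mult_nonneg_nonneg) auto
  have ERn: "\<bar>measure_pmf.expectation (joint_dist K N P pol x0 t) (\<lambda>(s,a). Rn s a)\<bar> \<le> MR" for t
    by (rule E_abs_le) (simp add: case_prod_unfold Rn_abs)
  have sa: "summable a"
  proof (rule summ_geo[where C=MR])
    fix t
    have "\<gamma> ^ t * \<bar>measure_pmf.expectation (joint_dist K N P pol x0 t) (\<lambda>(s,a). Rn s a)\<bar> \<le> \<gamma> ^ t * MR"
      by (rule mult_left_mono[OF ERn]) (use gamma0 in simp)
    thus "\<bar>a t\<bar> \<le> MR * \<gamma> ^ t" unfolding a_def using gamma0 by (simp add: abs_mult mult.commute)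
  qed
  have sb: "summable b"
  proof (rule summ_geo[where C=MR])
    fix t
    have "\<gamma> ^ t * \<bar>Rm t (?mu t)\<bar> \<le> \<gamma> ^ t * MR"
      by (rule mult_left_mono[OF Rm_abs]) (use gamma0 in simp)
    thus "\<bar>b t\<bar> \<le> MR * \<gamma> ^ t" unfolding b_def using gamma0 by (simp add: abs_mult mult.commute)
  qed
  have sgeo1: "summable (\<lambda>t. \<gamma> ^ t)" by (rule summable_geometric[OF g1])
  have sgeo2: "summable (\<lambda>t. (\<gamma> * SPc) ^ t)" by (rule summable_geometric[OF g2])
  have sg: "summable g" unfolding g_def
    by (intro summable_add summable_mult summable_diff sgeo1 sgeo2)
  have fg: "\<bar>a t - b t\<bar> \<le> g t" for t
  proof -
    have "\<bar>a t - b t\<bar> = \<gamma> ^ t * \<bar>measure_pmf.expectation (joint_dist K N P pol x0 t) (\<lambda>(s,a). Rn s a) - Rm t (?mu t)\<bar>"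
      unfolding a_def b_def right_diff_distrib[symmetric] abs_mult using gamma0 by simp
    also have "\<dots> \<le> \<gamma> ^ t * ((MR + LR) * dd + SRc * ((2 + K * LP) * dd * (SPc ^ t - 1) / (SPc - 1)))"
    proof (rule mult_left_mono)
      have e1: "\<bar>measure_pmf.expectation (joint_dist K N P pol x0 t) (\<lambda>(s,a). Rn s a) - Rm t (?mu t)\<bar> \<le> (MR + LR) * dd + SRc * et x0 (emp N x0) t"
        by (rule rew_t)
      have e2: "SRc * et x0 (emp N x0) t \<le> SRc * ((2 + K * LP) * dd * (SPc ^ t - 1) / (SPc - 1))"
        by (rule mult_left_mono[OF et_bound SR0])
      show "\<bar>measure_pmf.expectation (joint_dist K N P pol x0 t) (\<lambda>(s,a). Rn s a) - Rm t (?mu t)\<bar> \<le> (MR + LR) * dd + SRc * ((2 + K * LP) * dd * (SPc ^ t - 1) / (SPc - 1))"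
        using e1 e2 by linarith
      show "0 \<le> \<gamma> ^ t" using gamma0 by simp
    qed
    also have "\<dots> = g t"
      unfolding g_def B_def using SP1 by (simp add: field_simps power_mult_distrib)
    finally show ?thesis .
  qed
  have "v_N K N \<gamma> r P x0 pol - v_MF K N \<gamma> r P (emp N x0) pol = suminf a - suminf b"
    by (simp only: vN_eq vMF_eq a_def[abs_def] b_def[abs_def])
  also have "\<dots> = (\<Sum>t. a t - b t)" by (rule suminf_diff[OF sa sb])
  finally have eq: "v_N K N \<gamma> r P x0 pol - v_MF K N \<gamma> r P (emp N x0) pol = (\<Sum>t. a t - b t)" .
  have sab: "summable (\<lambda>t. \<bar>a t - b t\<bar>)"
    by (rule summable_comparison_test'[OF sg, where N=0]) (use fg in auto)
  have "\<bar>\<Sum>t. a t - b t\<bar> \<le> (\<Sum>t. \<bar>a t - b t\<bar>)" by (rule summable_rabs[OF sab])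
  also have "\<dots> \<le> suminf g" by (rule suminf_le[OF fg sab sg])
  also have "suminf g = (MR + LR) * dd * (1 / (1 - \<gamma>)) + B * (1 / (1 - \<gamma> * SPc) - 1 / (1 - \<gamma>))"
  proof -
    have sd: "summable (\<lambda>t. (\<gamma> * SPc) ^ t - \<gamma> ^ t)" by (rule summable_diff[OF sgeo2 sgeo1])
    have sg0: "suminf g = (\<Sum>t. (MR + LR) * dd * \<gamma> ^ t) + (\<Sum>t. B * ((\<gamma> * SPc) ^ t - \<gamma> ^ t))"
      unfolding g_def by (rule suminf_add[symmetric]) (rule summable_mult[OF sgeo1], rule summable_mult[OF sd])
    have s1: "(\<Sum>t. (MR + LR) * dd * \<gamma> ^ t) = (MR + LR) * dd * (\<Sum>t. \<gamma> ^ t)"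
      by (rule suminf_mult[OF sgeo1])
    have s2: "(\<Sum>t. B * ((\<gamma> * SPc) ^ t - \<gamma> ^ t)) = B * ((\<Sum>t. (\<gamma> * SPc) ^ t) - (\<Sum>t. \<gamma> ^ t))"
      by (subst suminf_mult[OF sd]) (simp add: suminf_diff[OF sgeo2 sgeo1])
    show ?thesis
      unfolding sg0 s1 s2 suminf_geometric[OF g1] suminf_geometric[OF g2] ..
  qed
  also have "\<dots> = (MR + LR) * dd / (1 - \<gamma>) + (2 + K * LP) * (SRc / (SPc - 1)) * dd * (1 / (1 - \<gamma> * SPc) - 1 / (1 - \<gamma>))"
    unfolding B_def by (simp add: field_simps)
  finally show ?thesis unfolding eq .
qed

end

theorem theorem2:
  fixes K :: nat and N :: "nat \<Rightarrow> nat"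
    and r :: "nat \<Rightarrow> 'x::finite \<Rightarrow> 'u::finite \<Rightarrow> (nat \<Rightarrow> 'x pmf) \<Rightarrow> (nat \<Rightarrow> 'u pmf) \<Rightarrow> real"
    and P :: "nat \<Rightarrow> 'x \<Rightarrow> 'u \<Rightarrow> (nat \<Rightarrow> 'x pmf) \<Rightarrow> (nat \<Rightarrow> 'u pmf) \<Rightarrow> 'x pmf"
    and MR LR LP LQ \<gamma> :: real
    and x0 :: "nat \<times> nat \<Rightarrow> 'x"
    and pol :: "nat \<Rightarrow> nat \<Rightarrow> 'x \<Rightarrow> (nat \<Rightarrow> 'x pmf) \<Rightarrow> 'u pmf"
  assumes K_pos: "K \<ge> 1"
    and N_pos: "\<And>k. k < K \<Longrightarrow> N k \<ge> 1"
    and consts_pos: "MR > 0" "LR > 0" "LP > 0" "LQ > 0"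
    and gamma: "0 \<le> \<gamma>" "\<gamma> < 1"
    and r_bound: "\<And>k x u mu nu. k < K \<Longrightarrow> \<bar>r k x u mu nu\<bar> \<le> MR"
    and r_lip: "\<And>k x u mu1 nu1 mu2 nu2. k < K \<Longrightarrow>
        \<bar>r k x u mu1 nu1 - r k x u mu2 nu2\<bar> \<le> LR * (distK K mu1 mu2 + distK K nu1 nu2)"
    and P_lip: "\<And>k x u mu1 nu1 mu2 nu2. k < K \<Longrightarrow>
        l1_pmf (P k x u mu1 nu1) (P k x u mu2 nu2) \<le> LP * (distK K mu1 mu2 + distK K nu1 nu2)"
    and SP_cond: "\<gamma> * ((1 + K * LQ) + K * LP * (2 + K * LQ)) < 1"
    and pol_in: "pol \<in> Lip_policies K LQ"
  shows
    "let CR = MR + LR; CP = 2 + K * LP;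
         SR = MR * (1 + LQ) + LR * (2 + K * LQ);
         SP = (1 + K * LQ) + K * LP * (2 + K * LQ);
         sq = sqrt (real CARD('x) * real CARD('u));
         sN = (\<Sum>k<K. 1 / sqrt (real (N k)))
     in \<bar>v_N K N \<gamma> r P x0 pol - v_MF K N \<gamma> r P (emp N x0) pol\<bar>
        \<le> CR / (1 - \<gamma>) * sq * sN
           + CP * (SR / (SP - 1)) * sq * sN * (1 / (1 - \<gamma> * SP) - 1 / (1 - \<gamma>))"
proof -
  interpret S: setting K N r P MR LR LP LQ \<gamma> pol
    by (rule setting.intro) (fact assms)+
  have "\<bar>v_N K N \<gamma> r P x0 pol - v_MF K N \<gamma> r P (emp N x0) pol\<bar>
    \<le> (MR + LR) * S.dd / (1 - \<gamma>) + (2 + K * LP) * (S.SRc / (S.SPc - 1)) * S.dd * (1 / (1 - \<gamma> * S.SPc) - 1 / (1 - \<gamma>))"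
    by (rule S.main_bound)
  thus ?thesis
    unfolding Let_def S.dd_def S.SRc_def S.SPc_def by (simp add: mult.assoc)
qed

end
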